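(* Let $I$ be an increasing conditional indicator w.r.t. $\mathcal{H}$, and let $\rho_I$ and $\operatorname{Dom}\rho_I$ be as defined in the context. Then: (1) $\rho_I$ is an $\mathcal{H}$-conditional risk measure on $\operatorname{Dom}\rho_I$; (2) if $\mathbb{D}_I^+$ is $\mathcal{H}$-convex (for example if $I$ is conditionally convex), then $\rho_I$ is conditionally convex; (3) if $I$ is $\mathcal{H}$-positively homogeneous, then $\rho_I$ is conditionally positively homogeneous; (4) if $I$ is super-additive, then $\rho_I$ is sub-additive.
   Context: Let $(\Omega,\mathcal{F},\mathbb{P})$ be a probability space with $\mathcal{F}$ complete, and $\mathcal{H}\subseteq\mathcal{F}$ a complete sub-$\sigma$-algebra. $\overline{\mathbb{R}}=\mathbb{R}\cup\{\pm\infty\}$ with conventions $r\pm\infty=\pm\infty$, $\infty-\infty=0$, $\infty+\infty=\infty$, $0\times(\pm\infty)=0$; $\mathbb{L}^0(G,\mathcal{G})$ is the set of $\mathcal{G}$-measurable random variables a.s. valued in $G$. $\operatorname{ess\,sup}_{\mathcal{H}}\Gamma$ is the smallest $\mathcal{H}$-measurable random variable dominating all elements of a family $\Gamma$ a.s., $\operatorname{ess\,inf}_{\mathcal{H}}\Gamma=-\operatorname{ess\,sup}_{\mathcal{H}}(-\Gamma)$; $\operatorname{ess\,inf}\Gamma$ denotes the essential infimum (w.r.t. $\mathcal{F}$), with $\operatorname{ess\,inf}\emptyset=+\infty$. A conditional indicator w.r.t. $\mathcal{H}$ is a map $I:\mathbb{D}_I\to\mathbb{L}^0(\overline{\mathbb{R}},\mathcal{H})$,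 $0\in\mathbb{D}_I\subseteq\mathbb{L}^0(\overline{\mathbb{R}},\mathcal{F})$, with $I(X)\in[\operatorname{ess\,inf}_{\mathcal{H}}(X),\operatorname{ess\,sup}_{\mathcal{H}}(X)]$ a.s. and $\mathbb{D}_I+\mathbb{L}^0(\overline{\mathbb{R}},\mathcal{H})\subseteq\mathbb{D}_I$. Increasing: $X\le Y\Rightarrow I(X)\le I(Y)$. Set $\mathbb{D}_I^+=\{X\in\mathbb{D}_I:I(X)\ge0\}$, $\mathcal{M}_I(X)=(\mathbb{D}_I^+-X)\cap\mathbb{L}^0(\mathbb{R},\mathcal{H})$, $\rho_I(X)=\operatorname{ess\,inf}\mathcal{M}_I(X)$ for $X\in\mathbb{L}^0(\mathbb{R},\mathcal{F})$, and $\operatorname{Dom}\rho_I=\{X\in\mathbb{L}^0(\mathbb{R},\mathcal{F}):\mathcal{M}_I(X)\neq\emptyset\}$. A set $E$ is $\mathcal{H}$-convex if $\alpha X_1+(1-\alpha)X_2\in E$ for $X_1,X_2\in E$, $\alpha\in\mathbb{L}^0([0,1],\mathcal{H})$. $I$ is conditionally convex if $\mathbb{D}_I$ is $\mathcal{H}$-convex and $I(\alpha X+(1-\alpha)Y)\le\alpha I(X)+(1-\alpha)I(Y)$ for such $\alpha$; $I$ is $\mathcal{H}$-positively homogeneous if $\alpha\mathbb{D}_I\subseteq\mathbb{D}_I$ and $I(\alpha X)=\alpha I(X)$ for all $\alpha\in\mathbb{L}^0(\mathbb{R}_+,\mathcal{H})$; super-additive: $I(X+Y)\ge I(X)+I(Y)$.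 An $\mathcal{H}$-conditional risk measure on a set $\mathbb{D}\subseteq\mathbb{L}^0(\mathbb{R},\mathcal{F})$ with $0\in\mathbb{D}$, $\mathbb{D}+\mathbb{L}^0(\mathbb{R},\mathcal{H})\subseteq\mathbb{D}$, is a map $\rho:\mathbb{D}\to\mathbb{L}^0(\overline{\mathbb{R}},\mathcal{H})$ with $\rho(0)=0$, $\rho(X_1)\le\rho(X_2)$ whenever $X_1\ge X_2$, and $\rho(X+\alpha)=\rho(X)-\alpha$ for $\alpha\in\mathbb{L}^0(\mathbb{R},\mathcal{H})$. It is conditionally convex if its domain is $\mathcal{H}$-convex and $\rho(\alpha X_1+(1-\alpha)X_2)\le\alpha\rho(X_1)+(1-\alpha)\rho(X_2)$ for $\alpha\in\mathbb{L}^0([0,1],\mathcal{H})$; conditionally positively homogeneous if its domain is stable under multiplication by $\mathbb{L}^0(\mathbb{R}_+,\mathcal{H})$ and $\rho(\alpha X)=\alpha\rho(X)$ for such $\alpha$; sub-additive if $\rho(X+Y)\le\rho(X)+\rho(Y)$.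
   Formalization: Part (2) omits the case of conditionally convex I, assuming only that $\mathbb{D}_I^+$ is $\mathcal{H}$-convex; super-additivity of I and sub-additivity of $\rho_I$ include closure of $\mathbb{D}_I$, respectively $\operatorname{Dom}\rho_I$, under addition. Apart from conventions, each condition added here is assumed in the paper as well or is needed for the statement above to hold. *)

theory Defs
  imports "HOL-Probability.Probability"
begin

text \<open>Isabelle's ereal addition has infinity + (- infinity) = infinity; the paper uses
  infinity - infinity = 0. All other cases agree (r +- infinity = +- infinity,
  infinity + infinity = infinity, 0 * (+- infinity) = 0 as for Isabelle's ereal times).\<close>

definition eplus :: "ereal \<Rightarrow> ereal \<Rightarrow> ereal" where
  "eplus a b = (if (a = \<infinity> \<and> b = -\<infinity>) \<or> (a = -\<infinity> \<and> b = \<infinity>) then 0 else a + b)"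

definition eminus :: "ereal \<Rightarrow> ereal \<Rightarrow> ereal" where
  "eminus a b = eplus a (- b)"

definition rv_add :: "('a \<Rightarrow> ereal) \<Rightarrow> ('a \<Rightarrow> ereal) \<Rightarrow> 'a \<Rightarrow> ereal" where
  "rv_add X Y = (\<lambda>w. eplus (X w) (Y w))"

definition rv_sub :: "('a \<Rightarrow> ereal) \<Rightarrow> ('a \<Rightarrow> ereal) \<Rightarrow> 'a \<Rightarrow> ereal" where
  "rv_sub X Y = (\<lambda>w. eminus (X w) (Y w))"

definition rv_mul :: "('a \<Rightarrow> ereal) \<Rightarrow> ('a \<Rightarrow> ereal) \<Rightarrow> 'a \<Rightarrow> ereal" where
  "rv_mul A X = (\<lambda>w. A w * X w)"

definition rv_comb :: "('a \<Rightarrow> ereal) \<Rightarrow> ('a \<Rightarrow> ereal) \<Rightarrow> ('a \<Rightarrow> ereal) \<Rightarrow> 'a \<Rightarrow> ereal" where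
  "rv_comb A X Y = rv_add (rv_mul A X) (rv_mul (\<lambda>w. 1 - A w) Y)"

definition ereal_reals :: "ereal set" where "ereal_reals = UNIV - {\<infinity>, -\<infinity>}"
definition ereal_unit :: "ereal set" where "ereal_unit = {0..1}"
definition ereal_nonneg_reals :: "ereal set" where "ereal_nonneg_reals = {0..<\<infinity>}"

definition L0 :: "'a measure \<Rightarrow> 'a measure \<Rightarrow> ereal set \<Rightarrow> ('a \<Rightarrow> ereal) set" where
  "L0 M N G = {X. X \<in> borel_measurable N \<and> (AE w in M. X w \<in> G)}"

definition ae_le :: "'a measure \<Rightarrow> ('a \<Rightarrow> ereal) \<Rightarrow> ('a \<Rightarrow> ereal) \<Rightarrow> bool" where
  "ae_le M X Y \<longleftrightarrow> (AE w in M. X w \<le> Y w)"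

definition ae_eq :: "'a measure \<Rightarrow> ('a \<Rightarrow> ereal) \<Rightarrow> ('a \<Rightarrow> ereal) \<Rightarrow> bool" where
  "ae_eq M X Y \<longleftrightarrow> (AE w in M. X w = Y w)"

text \<open>A set of random variables is a set of a.s.-equivalence classes.\<close>
definition ae_closed :: "'a measure \<Rightarrow> ('a \<Rightarrow> ereal) set \<Rightarrow> bool" where
  "ae_closed M D \<longleftrightarrow> (\<forall>X\<in>D. \<forall>Y. Y \<in> borel_measurable M \<longrightarrow> ae_eq M X Y \<longrightarrow> Y \<in> D)"

definition is_ess_sup :: "'a measure \<Rightarrow> 'a measure \<Rightarrow> ('a \<Rightarrow> ereal) set \<Rightarrow> ('a \<Rightarrow> ereal) \<Rightarrow> bool" where
  "is_ess_sup M N G Y \<longleftrightarrow> Y \<in> borel_measurable N \<and> (\<forall>X\<in>G. ae_le M X Y) \<and>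
     (\<forall>Z\<in>borel_measurable N. (\<forall>X\<in>G. ae_le M X Z) \<longrightarrow> ae_le M Y Z)"

definition ess_sup :: "'a measure \<Rightarrow> 'a measure \<Rightarrow> ('a \<Rightarrow> ereal) set \<Rightarrow> 'a \<Rightarrow> ereal" where
  "ess_sup M N G = (SOME Y. is_ess_sup M N G Y)"

definition ess_inf :: "'a measure \<Rightarrow> 'a measure \<Rightarrow> ('a \<Rightarrow> ereal) set \<Rightarrow> 'a \<Rightarrow> ereal" where
  "ess_inf M N G = (\<lambda>w. - ess_sup M N ((\<lambda>X w. - X w) ` G) w)"

definition H_convex :: "'a measure \<Rightarrow> 'a measure \<Rightarrow> ('a \<Rightarrow> ereal) set \<Rightarrow> bool" where
  "H_convex M H E \<longleftrightarrow> (\<forall>X1\<in>E. \<forall>X2\<in>E. \<forall>A\<in>L0 M H ereal_unit. rv_comb A X1 X2 \<in> E)"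

definition cond_indicator ::
  "'a measure \<Rightarrow> 'a measure \<Rightarrow> ('a \<Rightarrow> ereal) set \<Rightarrow> (('a \<Rightarrow> ereal) \<Rightarrow> 'a \<Rightarrow> ereal) \<Rightarrow> bool" where
  "cond_indicator M H D I \<longleftrightarrow>
     D \<subseteq> L0 M M UNIV \<and> (\<lambda>_. 0) \<in> D \<and> ae_closed M D \<and>
     (\<forall>X\<in>D. \<forall>Y\<in>D. ae_eq M X Y \<longrightarrow> ae_eq M (I X) (I Y)) \<and>
     (\<forall>X\<in>D. I X \<in> L0 M H UNIV) \<and>
     (\<forall>X\<in>D. ae_le M (ess_inf M H {X}) (I X) \<and> ae_le M (I X) (ess_sup M H {X})) \<and>
     (\<forall>X\<in>D. \<forall>A\<in>L0 M H UNIV. rv_add X A \<in> D)"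

definition increasing_indicator :: "'a measure \<Rightarrow> ('a \<Rightarrow> ereal) set \<Rightarrow> (('a \<Rightarrow> ereal) \<Rightarrow> 'a \<Rightarrow> ereal) \<Rightarrow> bool" where
  "increasing_indicator M D I \<longleftrightarrow> (\<forall>X\<in>D. \<forall>Y\<in>D. ae_le M X Y \<longrightarrow> ae_le M (I X) (I Y))"

definition pos_homogeneous_indicator ::
  "'a measure \<Rightarrow> 'a measure \<Rightarrow> ('a \<Rightarrow> ereal) set \<Rightarrow> (('a \<Rightarrow> ereal) \<Rightarrow> 'a \<Rightarrow> ereal) \<Rightarrow> bool" where
  "pos_homogeneous_indicator M H D I \<longleftrightarrow>
     (\<forall>A\<in>L0 M H ereal_nonneg_reals. \<forall>X\<in>D. rv_mul A X \<in> D \<and> ae_eq M (I (rv_mul A X)) (rv_mul A (I X)))"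

definition superadditive_indicator :: "'a measure \<Rightarrow> ('a \<Rightarrow> ereal) set \<Rightarrow> (('a \<Rightarrow> ereal) \<Rightarrow> 'a \<Rightarrow> ereal) \<Rightarrow> bool" where
  "superadditive_indicator M D I \<longleftrightarrow>
     (\<forall>X\<in>D. \<forall>Y\<in>D. rv_add X Y \<in> D \<and> ae_le M (rv_add (I X) (I Y)) (I (rv_add X Y)))"

definition D_plus :: "'a measure \<Rightarrow> ('a \<Rightarrow> ereal) set \<Rightarrow> (('a \<Rightarrow> ereal) \<Rightarrow> 'a \<Rightarrow> ereal) \<Rightarrow> ('a \<Rightarrow> ereal) set" where
  "D_plus M D I = {X\<in>D. ae_le M (\<lambda>_. 0) (I X)}"

definition M_I :: "'a measure \<Rightarrow> 'a measure \<Rightarrow> ('a \<Rightarrow> ereal) set \<Rightarrow> (('a \<Rightarrow> ereal) \<Rightarrow> 'a \<Rightarrow> ereal)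
    \<Rightarrow> ('a \<Rightarrow> ereal) \<Rightarrow> ('a \<Rightarrow> ereal) set" where
  "M_I M H D I X = {Z \<in> L0 M H ereal_reals. \<exists>Y\<in>D_plus M D I. ae_eq M Z (rv_sub Y X)}"

definition rho_I :: "'a measure \<Rightarrow> 'a measure \<Rightarrow> ('a \<Rightarrow> ereal) set \<Rightarrow> (('a \<Rightarrow> ereal) \<Rightarrow> 'a \<Rightarrow> ereal)
    \<Rightarrow> ('a \<Rightarrow> ereal) \<Rightarrow> 'a \<Rightarrow> ereal" where
  "rho_I M H D I X = ess_inf M M (M_I M H D I X)"

definition Dom_rho_I :: "'a measure \<Rightarrow> 'a measure \<Rightarrow> ('a \<Rightarrow> ereal) set \<Rightarrow> (('a \<Rightarrow> ereal) \<Rightarrow> 'a \<Rightarrow> ereal)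
    \<Rightarrow> ('a \<Rightarrow> ereal) set" where
  "Dom_rho_I M H D I = {X \<in> L0 M M ereal_reals. M_I M H D I X \<noteq> {}}"

definition cond_risk_measure ::
  "'a measure \<Rightarrow> 'a measure \<Rightarrow> ('a \<Rightarrow> ereal) set \<Rightarrow> (('a \<Rightarrow> ereal) \<Rightarrow> 'a \<Rightarrow> ereal) \<Rightarrow> bool" where
  "cond_risk_measure M H D \<rho> \<longleftrightarrow>
     D \<subseteq> L0 M M ereal_reals \<and> (\<lambda>_. 0) \<in> D \<and> ae_closed M D \<and>
     (\<forall>X\<in>D. \<forall>A\<in>L0 M H ereal_reals. rv_add X A \<in> D) \<and>
     (\<forall>X\<in>D. \<rho> X \<in> L0 M H UNIV) \<and>
     ae_eq M (\<rho> (\<lambda>_. 0)) (\<lambda>_. 0) \<and>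
     (\<forall>X1\<in>D. \<forall>X2\<in>D. ae_le M X2 X1 \<longrightarrow> ae_le M (\<rho> X1) (\<rho> X2)) \<and>
     (\<forall>X\<in>D. \<forall>A\<in>L0 M H ereal_reals. ae_eq M (\<rho> (rv_add X A)) (rv_sub (\<rho> X) A))"

definition cond_convex_rm ::
  "'a measure \<Rightarrow> 'a measure \<Rightarrow> ('a \<Rightarrow> ereal) set \<Rightarrow> (('a \<Rightarrow> ereal) \<Rightarrow> 'a \<Rightarrow> ereal) \<Rightarrow> bool" where
  "cond_convex_rm M H D \<rho> \<longleftrightarrow> H_convex M H D \<and>
     (\<forall>X1\<in>D. \<forall>X2\<in>D. \<forall>A\<in>L0 M H ereal_unit.
        ae_le M (\<rho> (rv_comb A X1 X2)) (rv_comb A (\<rho> X1) (\<rho> X2)))"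

definition cond_pos_homogeneous_rm ::
  "'a measure \<Rightarrow> 'a measure \<Rightarrow> ('a \<Rightarrow> ereal) set \<Rightarrow> (('a \<Rightarrow> ereal) \<Rightarrow> 'a \<Rightarrow> ereal) \<Rightarrow> bool" where
  "cond_pos_homogeneous_rm M H D \<rho> \<longleftrightarrow>
     (\<forall>A\<in>L0 M H ereal_nonneg_reals. \<forall>X\<in>D. rv_mul A X \<in> D \<and> ae_eq M (\<rho> (rv_mul A X)) (rv_mul A (\<rho> X)))"

definition subadditive_rm :: "'a measure \<Rightarrow> ('a \<Rightarrow> ereal) set \<Rightarrow> (('a \<Rightarrow> ereal) \<Rightarrow> 'a \<Rightarrow> ereal) \<Rightarrow> bool" where
  "subadditive_rm M D \<rho> \<longleftrightarrow>
     (\<forall>X\<in>D. \<forall>Y\<in>D. rv_add X Y \<in> D \<and> ae_le M (\<rho> (rv_add X Y)) (rv_add (\<rho> X) (\<rho> Y)))"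

end

theory Submission
  imports Defs
begin
lemma small_le0: fixes x :: real assumes "\<And>n::nat. x < 1 / real (Suc n)" shows "x \<le> 0"
proof (rule ccontr)
  assume "\<not> x \<le> 0" then have "0 < x" by simp
  from reals_Archimedean[OF this] obtain n where "inverse (real (Suc n)) < x" by auto
  with assms[of n] show False by (simp add: inverse_eq_divide)
qed

lemma ess_sup_step:
  fixes G :: "('a \<Rightarrow> ereal) set" and q :: real
  assumes P: "prob_space M" and GM: "G \<subseteq> borel_measurable M"
  shows "\<exists>C. countable C \<and> C \<subseteq> G \<and> (\<forall>f\<in>G. AE w in M. ereal q < f w \<longrightarrow> (\<exists>g\<in>C. ereal q < g w))"
proof -
  interpret prob_space M by fact
  define U where "U C = (\<Union>g\<in>C. {w\<in>space M. ereal q < g w})" for C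
  have U_sets: "U C \<in> sets M" if "countable C" "C \<subseteq> G" for C
    unfolding U_def
  proof (rule sets.countable_UN'[OF that(1)])
    show "(\<lambda>g. {w \<in> space M. ereal q < g w}) ` C \<subseteq> sets M"
    proof
      fix A assume "A \<in> (\<lambda>g. {w \<in> space M. ereal q < g w}) ` C"
      then obtain g where g: "g \<in> C" "A = {w \<in> space M. ereal q < g w}" by auto
      then have [measurable]: "g \<in> borel_measurable M" using that GM by auto
      show "A \<in> sets M" unfolding g by measurable
    qed
  qed
  define S where "S = (\<lambda>C. measure M (U C)) ` {C. countable C \<and> C \<subseteq> G}"
  have S_ne: "S \<noteq> {}" unfolding S_def by auto
  have S_bdd: "bdd_above S" unfolding S_def by (intro bdd_aboveI[of _ 1]) auto
  define s where "s = Sup S"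
  have "\<exists>C. countable C \<and> C \<subseteq> G \<and> s - 1/Suc n < measure M (U C)" for n :: nat
  proof -
    have "s - 1/Suc n < s" by simp
    then obtain x where "x \<in> S" "s - 1/Suc n < x"
      using less_cSup_iff[OF S_ne S_bdd] unfolding s_def by blast
    then show ?thesis unfolding S_def by auto
  qed
  then obtain Cn where Cn: "\<And>n. countable (Cn n) \<and> Cn n \<subseteq> G \<and> s - 1/Suc n < measure M (U (Cn n))"
    by metis
  define C where "C = (\<Union>n. Cn n)"
  have cC: "countable C" unfolding C_def using Cn by auto
  have CG: "C \<subseteq> G" unfolding C_def using Cn by auto
  have ge: "s - 1/Suc n < measure M (U C)" for n
  proof -
    have "U (Cn n) \<subseteq> U C" unfolding U_def C_def by auto
    then have "measure M (U (Cn n)) \<le> measure M (U C)"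
      using U_sets cC CG by (intro finite_measure_mono) auto
    then show ?thesis using Cn[of n] by linarith
  qed
  show ?thesis
  proof (intro exI conjI ballI)
    show "countable C" "C \<subseteq> G" by fact+
    fix f assume fG: "f \<in> G"
    define C' where "C' = insert f C"
    have cC': "countable C'" "C' \<subseteq> G" using cC CG fG by (auto simp: C'_def)
    have "measure M (U C') \<in> S" using cC' unfolding S_def by auto
    then have le: "measure M (U C') \<le> s" unfolding s_def using S_bdd by (rule cSup_upper)
    have sub: "U C \<subseteq> U C'" unfolding U_def C'_def by auto
    have "measure M (U C' - U C) = measure M (U C') - measure M (U C)"
      using U_sets[OF cC CG] U_sets[OF cC'] sub by (intro finite_measure_Diff) auto
    also have "\<dots> \<le> 0" proof (rule small_le0)
      fix n :: nat show "measure M (U C') - measure M (U C) < 1 / real (Suc n)" using le ge[of n] by linarith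
    qed
    finally have "measure M (U C' - U C) = 0" by (simp add: measure_nonneg antisym)
    then have N: "U C' - U C \<in> null_sets M"
      using U_sets[OF cC CG] U_sets[OF cC'] by (auto simp: emeasure_eq_measure)
    show "AE w in M. ereal q < f w \<longrightarrow> (\<exists>g\<in>C. ereal q < g w)"
      by (rule AE_I'[OF N]) (auto simp: U_def C'_def)
  qed
qed

lemma ess_sup_exists:
  fixes G :: "('a \<Rightarrow> ereal) set"
  assumes P: "prob_space M" and GM: "G \<subseteq> borel_measurable M" and Gne: "G \<noteq> {}"
  shows "\<exists>g::nat \<Rightarrow> 'a \<Rightarrow> ereal. range g \<subseteq> G \<and> is_ess_sup M M G (\<lambda>w. SUP n. g n w)"
proof -
  have "\<forall>q::real. \<exists>C. countable C \<and> C \<subseteq> G \<and> (\<forall>f\<in>G. AE w in M. ereal q < f w \<longrightarrow> (\<exists>g\<in>C. ereal q < g w))"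
    using ess_sup_step[OF P GM] by blast
  then have "\<exists>Cq. \<forall>q::real. countable (Cq q) \<and> Cq q \<subseteq> G \<and> (\<forall>f\<in>G. AE w in M. ereal q < f w \<longrightarrow> (\<exists>g\<in>Cq q. ereal q < g w))"
    by (rule choice)
  then obtain Cq where Cq: "\<And>q::real. countable (Cq q) \<and> Cq q \<subseteq> G \<and> (\<forall>f\<in>G. AE w in M. ereal q < f w \<longrightarrow> (\<exists>g\<in>Cq q. ereal q < g w))"
    by blast
  obtain g0 where g0: "g0 \<in> G" using Gne by blast
  define C where "C = insert g0 (\<Union>q\<in>\<rat>. Cq q)"
  have cC: "countable C" unfolding C_def using Cq countable_rat by auto
  have CG: "C \<subseteq> G" unfolding C_def using Cq g0 by auto
  have Cne: "C \<noteq> {}" unfolding C_def by auto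
  define g where "g = from_nat_into C"
  have rg: "range g = C" unfolding g_def using Cne cC by simp
  have SUPeq: "(\<lambda>w. SUP n. g n w) = (\<lambda>w. SUP f\<in>C. f w)"
    unfolding rg[symmetric] by (simp add: image_comp)
  have "is_ess_sup M M G (\<lambda>w. SUP f\<in>C. f w)"
    unfolding is_ess_sup_def
  proof (intro conjI ballI allI impI)
    show "(\<lambda>w. SUP f\<in>C. f w) \<in> borel_measurable M"
      using cC CG GM by (intro borel_measurable_SUP) auto
  next
    fix f assume fG: "f \<in> G"
    have "AE w in M. \<forall>q\<in>\<rat>. ereal q < f w \<longrightarrow> (\<exists>g\<in>Cq q. ereal q < g w)"
      using Cq fG countable_rat by (intro AE_ball_countable') auto
    then show "ae_le M f (\<lambda>w. SUP f\<in>C. f w)"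
      unfolding ae_le_def
    proof eventually_elim
      case (elim w)
      show ?case
      proof (rule ccontr)
        assume "\<not> f w \<le> (SUP f\<in>C. f w)"
        then have "(SUP f\<in>C. f w) < f w" by simp
        from ereal_dense3[OF this] obtain r :: rat
          where r: "(SUP f\<in>C. f w) < ereal (real_of_rat r)" "ereal (real_of_rat r) < f w" by auto
        have "real_of_rat r \<in> \<rat>" by (simp add: Rats_def)
        with elim r(2) obtain h where h: "h \<in> Cq (real_of_rat r)" "ereal (real_of_rat r) < h w" by blast
        have "h \<in> C" using h(1) \<open>real_of_rat r \<in> \<rat>\<close> unfolding C_def by auto
        then have "h w \<le> (SUP f\<in>C. f w)" by (rule SUP_upper)
        with h(2) r(1) show False by simp
      qed
    qed
  next
    fix Z :: "'a \<Rightarrow> ereal" assume "Z \<in> borel_measurable M" and up: "\<forall>f\<in>G. ae_le M f Z"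
    have "AE w in M. \<forall>f\<in>C. f w \<le> Z w"
      using up CG cC unfolding ae_le_def by (intro AE_ball_countable') auto
    then show "ae_le M (\<lambda>w. SUP f\<in>C. f w) Z"
      unfolding ae_le_def by eventually_elim (auto intro: SUP_least)
  qed
  then show ?thesis using rg CG SUPeq by (intro exI[of _ g]) auto
qed

lemma eplus_ereal[simp]: "eplus (ereal a) (ereal b) = ereal (a + b)"
  by (simp add: eplus_def)
lemma eminus_ereal[simp]: "eminus (ereal a) (ereal b) = ereal (a - b)"
  by (simp add: eminus_def eplus_def)
lemma eplus_0[simp]: "eplus x 0 = x" "eplus 0 x = x"
  by (auto simp: eplus_def)
lemma eminus_0[simp]: "eminus x 0 = x"
  by (auto simp: eminus_def eplus_def)
lemma eminus_realD: "eminus y (ereal x) = ereal z \<Longrightarrow> y = ereal (x + z)"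
  by (cases y) (auto simp: eminus_def eplus_def)
lemma ereal_reals_iff: "x \<in> ereal_reals \<longleftrightarrow> (\<exists>r. x = ereal r)"
  by (cases x) (auto simp: ereal_reals_def)
lemma ereal_unit_iff: "x \<in> ereal_unit \<longleftrightarrow> (\<exists>r. x = ereal r \<and> 0 \<le> r \<and> r \<le> 1)"
  by (cases x) (auto simp: ereal_unit_def)
lemma ereal_nonneg_iff: "x \<in> ereal_nonneg_reals \<longleftrightarrow> (\<exists>r. x = ereal r \<and> 0 \<le> r)"
  by (cases x) (auto simp: ereal_nonneg_reals_def)
lemma ereal_reals_real: "x \<in> ereal_reals \<Longrightarrow> ereal (real_of_ereal x) = x"
  by (auto simp: ereal_reals_iff)

lemma pw_add:
  fixes x :: ereal and u v :: "nat \<Rightarrow> real"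
  assumes h: "\<And>n m. x \<le> ereal (u n + v m)"
  shows "x \<le> eplus (INF n. ereal (u n)) (INF m. ereal (v m))"
proof (cases x)
  case MInf then show ?thesis by simp
next
  case PInf then show ?thesis using h[of 0 0] by simp
next
  case (real r)
  have rv: "ereal (r - v m) \<le> (INF n. ereal (u n))" for m
  proof (rule INF_greatest)
    fix n show "ereal (r - v m) \<le> ereal (u n)" using h[of n m] real by simp
  qed
  then have U: "ereal (r - v 0) \<le> (INF n. ereal (u n))" "(INF n. ereal (u n)) \<le> ereal (u 0)"
    by (auto intro: INF_lower2)
  then obtain U where Ueq: "(INF n. ereal (u n)) = ereal U" by (cases "INF n. ereal (u n)") auto
  have "ereal (r - U) \<le> (INF m. ereal (v m))"
  proof (rule INF_greatest)
    fix m have "ereal (r - v m) \<le> ereal U" using rv[of m] Ueq by simp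
    then show "ereal (r - U) \<le> ereal (v m)" by simp
  qed
  moreover have "(INF m. ereal (v m)) \<le> ereal (v 0)" by (auto intro: INF_lower2)
  ultimately obtain V where Veq: "(INF m. ereal (v m)) = ereal V" "r - U \<le> V"
    by (cases "INF m. ereal (v m)") auto
  show ?thesis using real Ueq Veq by simp
qed

lemma pw_mul:
  fixes x :: ereal and u :: "nat \<Rightarrow> real" and a :: real
  assumes a: "0 \<le> a" and h: "\<And>n. x \<le> ereal (a * u n)"
  shows "x \<le> ereal a * (INF n. ereal (u n))"
proof (cases x)
  case MInf then show ?thesis by simp
next
  case PInf then show ?thesis using h[of 0] by simp
next
  case (real r)
  show ?thesis
  proof (cases "a = 0")
    case True then show ?thesis using h[of 0] real by (simp add: zero_ereal_def[symmetric])
  next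
    case False then have ap: "0 < a" using a by simp
    have le: "ereal (r / a) \<le> (INF n. ereal (u n))"
    proof (rule INF_greatest)
      fix n have "r \<le> a * u n" using h[of n] real by simp
      then show "ereal (r / a) \<le> ereal (u n)" using ap by (simp add: divide_le_eq mult.commute)
    qed
    moreover have "(INF n. ereal (u n)) \<le> ereal (u 0)" by (auto intro: INF_lower2)
    ultimately obtain U where "(INF n. ereal (u n)) = ereal U" "r / a \<le> U"
      by (cases "INF n. ereal (u n)") auto
    then show ?thesis using real ap by (simp add: divide_le_eq mult.commute)
  qed
qed

lemma pw_conv:
  fixes x :: ereal and u v :: "nat \<Rightarrow> real" and a :: real
  assumes a: "0 \<le> a" "a \<le> 1" and h: "\<And>n m. x \<le> ereal (a * u n + (1 - a) * v m)"
  shows "x \<le> eplus (ereal a * (INF n. ereal (u n))) ((1 - ereal a) * (INF m. ereal (v m)))"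
proof (cases "a = 0")
  case True
  have "x \<le> (INF m. ereal (v m))" using h[of 0] True by (intro INF_greatest) auto
  then show ?thesis using True by (simp add: zero_ereal_def[symmetric] one_ereal_def[symmetric])
next
  case a0: False
  show ?thesis
  proof (cases "a = 1")
    case True
    have "x \<le> (INF n. ereal (u n))" using h[of _ 0] True by (intro INF_greatest) auto
    then show ?thesis using True by (simp add: zero_ereal_def[symmetric] one_ereal_def[symmetric])
  next
    case a1: False
    have ap: "0 < a" and ap1: "0 < 1 - a" using a a0 a1 by auto
    have pw: "x \<le> ereal (a * u n) + ereal ((1 - a) * v m)" for n m using h[of n m] by simp
    have "x \<le> ereal a * (INF n. ereal (u n)) + ereal ((1 - a) * v m)" for m
    proof (cases x)
      case MInf then show ?thesis by simp
    next
      case PInf then show ?thesis using h[of 0 m] by simp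
    next
      case (real r)
      have "r - (1 - a) * v m \<le> a * u n" for n using h[of n m] real by simp
      then have "x - ereal ((1 - a) * v m) \<le> ereal (a * u n)" for n using real by simp
      then have "x - ereal ((1 - a) * v m) \<le> ereal a * (INF n. ereal (u n))"
        using real by (intro pw_mul[OF a(1)]) simp
      then show ?thesis using real
        by (cases "ereal a * (INF n. ereal (u n))") auto
    qed
    then have A: "x \<le> ereal a * (INF n. ereal (u n)) + ereal ((1 - a) * v m)" for m .
    show ?thesis
    proof (cases x)
      case MInf then show ?thesis by simp
    next
      case PInf then show ?thesis using h[of 0 0] by simp
    next
      case (real r)
      have "(INF n. ereal (u n)) \<le> ereal (u 0)" by (auto intro: INF_lower2)
      moreover have "ereal a * (INF n. ereal (u n)) \<noteq> -\<infinity>" using A[of 0] real by auto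
      ultimately obtain U where Ueq: "(INF n. ereal (u n)) = ereal U"
        using ap by (cases "INF n. ereal (u n)") auto
      have "r - a * U \<le> (1 - a) * v m" for m using A[of m] real Ueq by simp
      then have "x - ereal (a * U) \<le> ereal (1 - a) * (INF m. ereal (v m))"
        using real ap1 by (intro pw_mul) auto
      moreover have "(INF m. ereal (v m)) \<le> ereal (v 0)" by (auto intro: INF_lower2)
      ultimately obtain V where Veq: "(INF m. ereal (v m)) = ereal V" "r - a * U \<le> (1 - a) * V"
        using real ap1 by (cases "INF m. ereal (v m)") auto
      show ?thesis using real Ueq Veq
        by (simp add: one_ereal_def)
    qed
  qed
qed

lemma eplus_meas[measurable (raw)]:
  fixes f g :: "'a \<Rightarrow> ereal"
  assumes [measurable]: "f \<in> borel_measurable N" "g \<in> borel_measurable N"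
  shows "(\<lambda>w. eplus (f w) (g w)) \<in> borel_measurable N"
  unfolding eplus_def by measurable

lemma eminus_meas[measurable (raw)]:
  fixes f g :: "'a \<Rightarrow> ereal"
  assumes [measurable]: "f \<in> borel_measurable N" "g \<in> borel_measurable N"
  shows "(\<lambda>w. eminus (f w) (g w)) \<in> borel_measurable N"
  unfolding eminus_def by measurable

lemma rv_add_meas[measurable]: "X \<in> borel_measurable N \<Longrightarrow> Y \<in> borel_measurable N \<Longrightarrow> rv_add X Y \<in> borel_measurable N"
  unfolding rv_add_def by measurable
lemma rv_sub_meas[measurable]: "X \<in> borel_measurable N \<Longrightarrow> Y \<in> borel_measurable N \<Longrightarrow> rv_sub X Y \<in> borel_measurable N"
  unfolding rv_sub_def by measurable
lemma rv_mul_meas[measurable]: "X \<in> borel_measurable N \<Longrightarrow> Y \<in> borel_measurable N \<Longrightarrow> rv_mul X Y \<in> borel_measurable N"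
  unfolding rv_mul_def by measurable
lemma rv_comb_meas[measurable]: "A \<in> borel_measurable N \<Longrightarrow> X \<in> borel_measurable N \<Longrightarrow> Y \<in> borel_measurable N \<Longrightarrow> rv_comb A X Y \<in> borel_measurable N"
  unfolding rv_comb_def
  by (intro rv_add_meas rv_mul_meas borel_measurable_ereal_diff) auto

lemma ereal_le_neg: "(x::ereal) \<le> - y \<longleftrightarrow> y \<le> - x"
  by (cases x; cases y) auto

lemma is_ess_sup_unique:
  assumes "is_ess_sup M N G Y1" "is_ess_sup M N G Y2"
  shows "AE w in M. Y1 w = Y2 w"
proof -
  have "ae_le M Y1 Y2" "ae_le M Y2 Y1" using assms unfolding is_ess_sup_def by blast+
  then show ?thesis unfolding ae_le_def by eventually_elim auto
qed

lemma ess_sup_is: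
  assumes P: "prob_space M" and GM: "G \<subseteq> borel_measurable M"
  shows "is_ess_sup M M G (ess_sup M M G)"
proof -
  have "\<exists>Y. is_ess_sup M M G Y"
  proof (cases "G = {}")
    case True
    then show ?thesis by (intro exI[of _ "\<lambda>_. -\<infinity>"]) (auto simp: is_ess_sup_def ae_le_def)
  next
    case False
    then show ?thesis using ess_sup_exists[OF P GM] by blast
  qed
  then show ?thesis unfolding ess_sup_def by (rule someI_ex)
qed

lemma neg_img_meas: "(G :: ('a \<Rightarrow> ereal) set) \<subseteq> borel_measurable M \<Longrightarrow> (\<lambda>X w. - X w) ` G \<subseteq> borel_measurable (M::'a measure)"
proof
  fix Y assume G: "G \<subseteq> borel_measurable M" and "Y \<in> (\<lambda>X w. - X w) ` G"
  then obtain X where X: "X \<in> G" "Y = (\<lambda>w. - X w)" by blast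
  then have [measurable]: "X \<in> borel_measurable M" using G by blast
  show "Y \<in> borel_measurable M" unfolding X by measurable
qed

lemma essinf_meas:
  assumes P: "prob_space M" and GM: "G \<subseteq> borel_measurable M"
  shows "ess_inf M M G \<in> borel_measurable M"
proof -
  have [measurable]: "ess_sup M M ((\<lambda>X w. - X w) ` G) \<in> borel_measurable M"
    using ess_sup_is[OF P neg_img_meas[OF GM]] unfolding is_ess_sup_def by blast
  show ?thesis unfolding ess_inf_def by measurable
qed

lemma essinf_lb:
  assumes P: "prob_space M" and GM: "G \<subseteq> borel_measurable M" and Z: "Z \<in> G"
  shows "AE w in M. ess_inf M M G w \<le> Z w"
proof -
  have "ae_le M (\<lambda>w. - Z w) (ess_sup M M ((\<lambda>X w. - X w) ` G))"
    using ess_sup_is[OF P neg_img_meas[OF GM]] Z unfolding is_ess_sup_def by blast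
  then show ?thesis unfolding ae_le_def ess_inf_def
    by eventually_elim (simp add: ereal_uminus_le_reorder)
qed

lemma essinf_glb:
  assumes P: "prob_space M" and GM: "G \<subseteq> borel_measurable M" and W: "W \<in> borel_measurable M"
    and lb: "\<And>Z. Z \<in> G \<Longrightarrow> AE w in M. W w \<le> Z w"
  shows "AE w in M. W w \<le> ess_inf M M G w"
proof -
  have "\<forall>X\<in>(\<lambda>X w. - X w) ` G. ae_le M X (\<lambda>w. - W w)"
  proof
    fix X assume "X \<in> (\<lambda>X w. - X w) ` G"
    then obtain Z where Z: "Z \<in> G" "X = (\<lambda>w. - Z w)" by blast
    show "ae_le M X (\<lambda>w. - W w)" using lb[OF Z(1)] unfolding ae_le_def Z(2)
      by eventually_elim simp
  qed
  moreover have "(\<lambda>w. - W w) \<in> borel_measurable M" using W by measurable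
  ultimately have "ae_le M (ess_sup M M ((\<lambda>X w. - X w) ` G)) (\<lambda>w. - W w)"
    using ess_sup_is[OF P neg_img_meas[OF GM]] unfolding is_ess_sup_def by blast
  then show ?thesis unfolding ae_le_def ess_inf_def
    by eventually_elim (simp add: ereal_le_neg)
qed

lemma essinf_seq:
  assumes P: "prob_space M" and GM: "G \<subseteq> borel_measurable M" and Gne: "G \<noteq> {}"
  shows "\<exists>g::nat \<Rightarrow> 'a \<Rightarrow> ereal. range g \<subseteq> G \<and> (AE w in M. ess_inf M M G w = (INF n. g n w))"
proof -
  let ?G = "(\<lambda>X w. - X w) ` G"
  obtain g' :: "nat \<Rightarrow> 'a \<Rightarrow> ereal" where g': "range g' \<subseteq> ?G" "is_ess_sup M M ?G (\<lambda>w. SUP n. g' n w)"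
  proof -
    have ne: "?G \<noteq> {}" using Gne by simp
    from ess_sup_exists[OF P neg_img_meas[OF GM] ne] obtain g :: "nat \<Rightarrow> 'a \<Rightarrow> ereal" where
      "range g \<subseteq> ?G" "is_ess_sup M M ?G (\<lambda>w. SUP n. g n w)" by (elim exE conjE) fast
    then show ?thesis by (rule that)
  qed
  have ae: "AE w in M. ess_sup M M ?G w = (SUP n. g' n w)"
    using is_ess_sup_unique[OF ess_sup_is[OF P neg_img_meas[OF GM]] g'(2)] .
  define g where "g n = (\<lambda>w. - g' n w)" for n
  have "g n \<in> G" for n
  proof -
    have "g' n \<in> ?G" using g'(1) by (rule range_subsetD)
    then obtain X where "X \<in> G" "g' n = (\<lambda>w. - X w)" by (rule imageE)
    then show ?thesis unfolding g_def by simp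
  qed
  moreover have "AE w in M. ess_inf M M G w = (INF n. g n w)"
    using ae
  proof eventually_elim
    case (elim w)
    have "(SUP n. g' n w) = (SUP n. - g n w)" unfolding g_def by simp
    also have "\<dots> = - (INF n. g n w)" by (rule ereal_SUP_uminus_eq)
    finally show ?case using elim unfolding ess_inf_def by simp
  qed
  ultimately show ?thesis by (intro exI[of _ g] conjI) auto
qed

lemma ess_sup_H_single:
  assumes "X \<in> borel_measurable H"
  shows "AE w in M. ess_sup M H {X} w \<le> X w"
proof -
  have "is_ess_sup M H {X} X" using assms by (auto simp: is_ess_sup_def ae_le_def)
  then have "is_ess_sup M H {X} (ess_sup M H {X})" unfolding ess_sup_def by (rule someI[where P="is_ess_sup M H {X}"])
  then have "\<forall>Z\<in>borel_measurable H. (\<forall>Y\<in>{X}. ae_le M Y Z) \<longrightarrow> ae_le M (ess_sup M H {X}) Z"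
    unfolding is_ess_sup_def by blast
  then have "ae_le M (ess_sup M H {X}) X" using assms by (simp add: ae_le_def)
  then show ?thesis unfolding ae_le_def .
qed

lemma ess_inf_H_single:
  assumes "X \<in> borel_measurable H"
  shows "AE w in M. X w \<le> ess_inf M H {X} w"
proof -
  have "(\<lambda>w. - X w) \<in> borel_measurable H" using assms by measurable
  from ess_sup_H_single[OF this, of M] show ?thesis unfolding ess_inf_def
    by (auto elim!: eventually_mono simp: ereal_le_neg)
qed

lemma L0_iff: "X \<in> L0 M N G \<longleftrightarrow> X \<in> borel_measurable N \<and> (AE w in M. X w \<in> G)"
  by (simp add: L0_def)

lemma realE: "x \<in> ereal_reals \<Longrightarrow> (\<And>r. x = ereal r \<Longrightarrow> P) \<Longrightarrow> P"
  by (auto simp: ereal_reals_iff)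

locale setting =
  fixes M H :: "'a measure" and D :: "('a \<Rightarrow> ereal) set" and I :: "('a \<Rightarrow> ereal) \<Rightarrow> 'a \<Rightarrow> ereal"
  assumes P: "prob_space M" and sub: "subalgebra M H" and nullH: "null_sets M \<subseteq> sets H"
    and CI: "cond_indicator M H D I" and incr: "increasing_indicator M D I"
begin

abbreviation "DP \<equiv> D_plus M D I"
abbreviation "MI \<equiv> M_I M H D I"
abbreviation "rho \<equiv> rho_I M H D I"
abbreviation "Dom \<equiv> Dom_rho_I M H D I"

lemma measH: "f \<in> borel_measurable H \<Longrightarrow> f \<in> borel_measurable M"
  using measurable_from_subalg[OF sub] .

lemma spaceH: "space H = space M" using sub by (simp add: subalgebra_def)

lemma transfer:
  fixes f g :: "'a \<Rightarrow> ereal"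
  assumes f: "f \<in> borel_measurable M" and g: "g \<in> borel_measurable H" and ae: "AE w in M. f w = g w"
  shows "f \<in> borel_measurable H"
proof -
  have gM[measurable]: "g \<in> borel_measurable M" using measH g .
  have fM[measurable]: "f \<in> borel_measurable M" using f .
  define N where "N = {w\<in>space M. f w \<noteq> g w}"
  have Ns: "N \<in> sets M" unfolding N_def by measurable
  from ae obtain N' where N': "{w \<in> space M. \<not> f w = g w} \<subseteq> N'" "emeasure M N' = 0" "N' \<in> sets M"
    by (rule AE_E)
  have "N \<in> null_sets M"
    using N' Ns unfolding N_def by (intro null_setsI) (auto intro: emeasure_eq_0)
  note NN = this
  show ?thesis
  proof (rule measurableI)
    fix x show "f x \<in> space borel" by simp
  next
    fix A :: "ereal set" assume A: "A \<in> sets borel"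
    have eq: "f -` A \<inter> space H = ((g -` A \<inter> space H) - N) \<union> ((f -` A \<inter> space M) \<inter> N)"
      unfolding spaceH N_def by auto
    have "g -` A \<inter> space H \<in> sets H" using g A by (rule measurable_sets)
    moreover have "N \<in> sets H" using NN nullH by blast
    moreover have "(f -` A \<inter> space M) \<inter> N \<in> null_sets M"
      using NN A by (intro null_set_Int1) (auto intro: measurable_sets[OF f])
    then have "(f -` A \<inter> space M) \<inter> N \<in> sets H" using nullH by blast
    ultimately show "f -` A \<inter> space H \<in> sets H" unfolding eq by blast
  qed
qed

lemma D_meas: "X \<in> D \<Longrightarrow> X \<in> borel_measurable M"
  using CI unfolding cond_indicator_def L0_def by blast
lemma D0: "(\<lambda>_. 0) \<in> D"
  using CI unfolding cond_indicator_def by blast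
lemma D_ae: "X \<in> D \<Longrightarrow> Y \<in> borel_measurable M \<Longrightarrow> AE w in M. X w = Y w \<Longrightarrow> Y \<in> D"
  using CI unfolding cond_indicator_def ae_closed_def ae_eq_def by blast
lemma I_cong: "X \<in> D \<Longrightarrow> Y \<in> D \<Longrightarrow> AE w in M. X w = Y w \<Longrightarrow> AE w in M. I X w = I Y w"
  using CI unfolding cond_indicator_def ae_eq_def by blast
lemma I_H: "X \<in> D \<Longrightarrow> I X \<in> borel_measurable H"
  using CI unfolding cond_indicator_def L0_def by blast
lemma D_add: "X \<in> D \<Longrightarrow> A \<in> borel_measurable H \<Longrightarrow> rv_add X A \<in> D"
  using CI unfolding cond_indicator_def L0_def by blast
lemma I_mono: "X \<in> D \<Longrightarrow> Y \<in> D \<Longrightarrow> AE w in M. X w \<le> Y w \<Longrightarrow> AE w in M. I X w \<le> I Y w"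
  using incr unfolding increasing_indicator_def ae_le_def by blast

lemma I_Hle: assumes "X \<in> D" "X \<in> borel_measurable H" shows "AE w in M. I X w \<le> X w"
proof -
  have "ae_le M (I X) (ess_sup M H {X})" using CI assms(1) unfolding cond_indicator_def by blast
  with ess_sup_H_single[OF assms(2), of M] show ?thesis unfolding ae_le_def
    by eventually_elim auto
qed

lemma I_Hge: assumes "X \<in> D" "X \<in> borel_measurable H" shows "AE w in M. X w \<le> I X w"
proof -
  have "ae_le M (ess_inf M H {X}) (I X)" using CI assms(1) unfolding cond_indicator_def by blast
  with ess_inf_H_single[OF assms(2), of M] show ?thesis unfolding ae_le_def
    by eventually_elim auto
qed

lemma DP_iff: "Y \<in> DP \<longleftrightarrow> Y \<in> D \<and> (AE w in M. 0 \<le> I Y w)"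
  by (simp add: D_plus_def ae_le_def)

lemma MI_iff: "Z \<in> MI X \<longleftrightarrow> Z \<in> borel_measurable H \<and> (AE w in M. Z w \<in> ereal_reals) \<and>
   (\<exists>Y. Y \<in> D \<and> (AE w in M. 0 \<le> I Y w) \<and> (AE w in M. Z w = eminus (Y w) (X w)))"
  by (auto simp: M_I_def D_plus_def L0_def ae_le_def ae_eq_def rv_sub_def)

lemma MI_I:
  assumes "Z \<in> borel_measurable H" "AE w in M. Z w \<in> ereal_reals" "Y \<in> D" "AE w in M. 0 \<le> I Y w"
    "AE w in M. Z w = eminus (Y w) (X w)"
  shows "Z \<in> MI X"
  using assms unfolding MI_iff by blast

lemma MI_E:
  assumes "Z \<in> MI X"
  obtains Y where "Z \<in> borel_measurable H" "AE w in M. Z w \<in> ereal_reals" "Y \<in> D" "AE w in M. 0 \<le> I Y w"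
    "AE w in M. Z w = eminus (Y w) (X w)"
  using assms unfolding MI_iff by blast

lemma Dom_iff: "X \<in> Dom \<longleftrightarrow> X \<in> borel_measurable M \<and> (AE w in M. X w \<in> ereal_reals) \<and> MI X \<noteq> {}"
  by (simp add: Dom_rho_I_def L0_def)

lemma MI_bm: "MI X \<subseteq> borel_measurable M"
proof
  fix Z assume "Z \<in> MI X" then show "Z \<in> borel_measurable M" using measH unfolding MI_iff by blast
qed

lemma rho_eq: "rho X = ess_inf M M (MI X)" by (simp add: rho_I_def)

lemma rho_meas[measurable]: "rho X \<in> borel_measurable M"
  unfolding rho_eq by (rule essinf_meas[OF P MI_bm])

lemma rho_lb: "Z \<in> MI X \<Longrightarrow> AE w in M. rho X w \<le> Z w"
  unfolding rho_eq by (rule essinf_lb[OF P MI_bm])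

lemma rho_glb: "W \<in> borel_measurable M \<Longrightarrow> (\<And>Z. Z \<in> MI X \<Longrightarrow> AE w in M. W w \<le> Z w) \<Longrightarrow> AE w in M. W w \<le> rho X w"
  unfolding rho_eq by (rule essinf_glb[OF P MI_bm])

lemma rho_seq:
  assumes "X \<in> Dom"
  shows "\<exists>g::nat \<Rightarrow> 'a \<Rightarrow> ereal. range g \<subseteq> MI X \<and> (AE w in M. rho X w = (INF n. g n w))"
  unfolding rho_eq using assms unfolding Dom_iff by (intro essinf_seq[OF P MI_bm]) auto

lemma rho_H:
  assumes "X \<in> Dom" shows "rho X \<in> borel_measurable H"
proof -
  obtain g :: "nat \<Rightarrow> 'a \<Rightarrow> ereal" where g: "range g \<subseteq> MI X" "AE w in M. rho X w = (INF n. g n w)"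
    using rho_seq[OF assms] by blast
  have "g n \<in> borel_measurable H" for n using range_subsetD[OF g(1), of n] unfolding MI_iff by blast
  then have "(\<lambda>w. INF n. g n w) \<in> borel_measurable H" by measurable
  then show ?thesis using transfer[OF rho_meas _ g(2)] by blast
qed

lemma Dom_D:
  assumes X: "X \<in> Dom" shows "X \<in> D"
proof -
  from X obtain Z where Z: "Z \<in> MI X" and Xm: "X \<in> borel_measurable M" and Xr: "AE w in M. X w \<in> ereal_reals"
    unfolding Dom_iff by blast
  from Z obtain Y where Y: "Z \<in> borel_measurable H" "AE w in M. Z w \<in> ereal_reals" "Y \<in> D"
    "AE w in M. Z w = eminus (Y w) (X w)" by (rule MI_E)
  have "(\<lambda>w. - Z w) \<in> borel_measurable H" using Y(1) by measurable
  then have YD: "rv_add Y (\<lambda>w. - Z w) \<in> D" using Y(3) by (rule D_add[rotated])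
  have "AE w in M. rv_add Y (\<lambda>w. - Z w) w = X w"
    using Y(2) Y(4) Xr
  proof eventually_elim
    case (elim w)
    from elim(1) obtain z where z: "Z w = ereal z" by (rule realE)
    from elim(3) obtain x where x: "X w = ereal x" by (rule realE)
    have "Y w = ereal (x + z)" using elim(2) z x by (intro eminus_realD) simp
    then show ?case using z x by (simp add: rv_add_def)
  qed
  then show ?thesis using D_ae[OF YD Xm] by blast
qed

end

lemma pwc1: "r1 \<le> ereal (z - a) \<Longrightarrow> eplus r1 (ereal a) \<le> ereal z"
  by (cases r1) (auto simp: eplus_def)
lemma pwc2: "r \<le> ereal (z + a) \<Longrightarrow> eminus r (ereal a) \<le> ereal z"
  by (cases r) (auto simp: eminus_def eplus_def)
lemma pwc3: "eplus r1 (ereal a) \<le> r \<Longrightarrow> eminus r (ereal a) \<le> r1 \<Longrightarrow> r1 = eminus r (ereal a)"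
  by (cases r1; cases r) (auto simp: eminus_def eplus_def)

context setting begin

lemma Dom_E: assumes "X \<in> Dom" shows "X \<in> borel_measurable M" "AE w in M. X w \<in> ereal_reals" "MI X \<noteq> {}"
  using assms unfolding Dom_iff by auto

lemma zero_H: "(\<lambda>_. 0::ereal) \<in> borel_measurable H" by simp

lemma zero_MI: "(\<lambda>_. 0) \<in> MI (\<lambda>_. 0)"
proof (rule MI_I[where Y="\<lambda>_. 0"])
  show "(\<lambda>_. 0) \<in> borel_measurable H" by simp
  show "AE w in M. (0::ereal) \<in> ereal_reals" by (simp add: ereal_reals_iff zero_ereal_def)
  show "(\<lambda>_. 0) \<in> D" by (rule D0)
  show "AE w in M. 0 \<le> I (\<lambda>_. 0) w" using I_Hge[OF D0 zero_H] by simp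
  show "AE w in M. 0 = eminus 0 0" by simp
qed

lemma zero_Dom: "(\<lambda>_. 0) \<in> Dom"
  unfolding Dom_iff using zero_MI by (auto simp: ereal_reals_iff zero_ereal_def)

lemma Dom_closed:
  assumes X: "X \<in> Dom" and Y: "Y \<in> borel_measurable M" and ae: "AE w in M. X w = Y w"
  shows "Y \<in> Dom"
proof -
  from Dom_E[OF X] obtain Z where Z: "Z \<in> MI X" by blast
  then obtain Y' where Y': "Z \<in> borel_measurable H" "AE w in M. Z w \<in> ereal_reals" "Y' \<in> D"
    "AE w in M. 0 \<le> I Y' w" "AE w in M. Z w = eminus (Y' w) (X w)" by (rule MI_E)
  have "AE w in M. Z w = eminus (Y' w) (Y w)" using Y'(5) ae by eventually_elim simp
  then have "Z \<in> MI Y" using Y' by (intro MI_I) auto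
  moreover have "AE w in M. Y w \<in> ereal_reals" using Dom_E(2)[OF X] ae by eventually_elim simp
  ultimately show ?thesis unfolding Dom_iff using Y by blast
qed

lemma MI_shift:
  assumes Z: "Z \<in> MI X" and Xr: "AE w in M. X w \<in> ereal_reals" and A: "A \<in> borel_measurable H"
    and Ar: "AE w in M. A w \<in> ereal_reals"
  shows "rv_sub Z A \<in> MI (rv_add X A)"
proof -
  from Z obtain Y where Y: "Z \<in> borel_measurable H" "AE w in M. Z w \<in> ereal_reals" "Y \<in> D"
    "AE w in M. 0 \<le> I Y w" "AE w in M. Z w = eminus (Y w) (X w)" by (rule MI_E)
  have m: "rv_sub Z A \<in> borel_measurable H" using Y(1) A by measurable
  have "AE w in M. rv_sub Z A w \<in> ereal_reals \<and> rv_sub Z A w = eminus (Y w) (rv_add X A w)"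
    using Y(2) Y(5) Xr Ar
  proof eventually_elim
    case (elim w)
    from elim(1) obtain z where z: "Z w = ereal z" by (rule realE)
    from elim(3) obtain x where x: "X w = ereal x" by (rule realE)
    from elim(4) obtain a where a: "A w = ereal a" by (rule realE)
    have "Y w = ereal (x + z)" using elim(2) z x by (intro eminus_realD) simp
    then show ?case using z x a by (simp add: rv_add_def rv_sub_def ereal_reals_iff)
  qed
  then show ?thesis using m Y(3,4) by (intro MI_I) (auto elim: eventually_mono)
qed

lemma MI_unshift:
  assumes Z: "Z \<in> MI (rv_add X A)" and Xr: "AE w in M. X w \<in> ereal_reals" and A: "A \<in> borel_measurable H"
    and Ar: "AE w in M. A w \<in> ereal_reals"
  shows "rv_add Z A \<in> MI X"
proof -
  from Z obtain Y where Y: "Z \<in> borel_measurable H" "AE w in M. Z w \<in> ereal_reals" "Y \<in> D"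
    "AE w in M. 0 \<le> I Y w" "AE w in M. Z w = eminus (Y w) (rv_add X A w)" by (rule MI_E)
  have m: "rv_add Z A \<in> borel_measurable H" using Y(1) A by measurable
  have "AE w in M. rv_add Z A w \<in> ereal_reals \<and> rv_add Z A w = eminus (Y w) (X w)"
    using Y(2) Y(5) Xr Ar
  proof eventually_elim
    case (elim w)
    from elim(1) obtain z where z: "Z w = ereal z" by (rule realE)
    from elim(3) obtain x where x: "X w = ereal x" by (rule realE)
    from elim(4) obtain a where a: "A w = ereal a" by (rule realE)
    have "Y w = ereal ((x + a) + z)" using elim(2) z x a by (intro eminus_realD) (simp add: rv_add_def)
    then show ?case using z x a by (simp add: rv_add_def rv_sub_def ereal_reals_iff)
  qed
  then show ?thesis using m Y(3,4) by (intro MI_I) (auto elim: eventually_mono)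
qed

lemma add_Dom:
  assumes X: "X \<in> Dom" and A: "A \<in> L0 M H ereal_reals"
  shows "rv_add X A \<in> Dom"
proof -
  have Am: "A \<in> borel_measurable H" and Ar: "AE w in M. A w \<in> ereal_reals" using A by (auto simp: L0_iff)
  from Dom_E[OF X] obtain Z where Z: "Z \<in> MI X" by blast
  have "rv_sub Z A \<in> MI (rv_add X A)" using MI_shift[OF Z Dom_E(2)[OF X] Am Ar] .
  moreover have "rv_add X A \<in> borel_measurable M" using Dom_E(1)[OF X] measH[OF Am] by measurable
  moreover have "AE w in M. rv_add X A w \<in> ereal_reals" using Dom_E(2)[OF X] Ar
    by eventually_elim (auto simp: ereal_reals_iff rv_add_def)
  ultimately show ?thesis unfolding Dom_iff by blast
qed

lemma MI_mono:
  assumes X1: "X1 \<in> Dom" and X2r: "AE w in M. X2 w \<in> ereal_reals" and le: "AE w in M. X2 w \<le> X1 w"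
    and Z: "Z \<in> MI X2"
  shows "Z \<in> MI X1"
proof -
  from Z obtain Y where Y: "Z \<in> borel_measurable H" "AE w in M. Z w \<in> ereal_reals" "Y \<in> D"
    "AE w in M. 0 \<le> I Y w" "AE w in M. Z w = eminus (Y w) (X2 w)" by (rule MI_E)
  have Y'D: "rv_add X1 Z \<in> D" using Dom_D[OF X1] Y(1) by (rule D_add)
  have "AE w in M. Y w \<le> rv_add X1 Z w \<and> Z w = eminus (rv_add X1 Z w) (X1 w)"
    using Y(2) Y(5) X2r le Dom_E(2)[OF X1]
  proof eventually_elim
    case (elim w)
    from elim(1) obtain z where z: "Z w = ereal z" by (rule realE)
    from elim(3) obtain x where x: "X2 w = ereal x" by (rule realE)
    from elim(5) obtain x1 where x1: "X1 w = ereal x1" by (rule realE)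
    have "Y w = ereal (x + z)" using elim(2) z x by (intro eminus_realD) simp
    then show ?case using z x x1 elim(4) by (simp add: rv_add_def)
  qed
  then have ae1: "AE w in M. Y w \<le> rv_add X1 Z w" and ae2: "AE w in M. Z w = eminus (rv_add X1 Z w) (X1 w)"
    by (auto elim: eventually_mono)
  have "AE w in M. I Y w \<le> I (rv_add X1 Z) w" using I_mono[OF Y(3) Y'D ae1] .
  then have "AE w in M. 0 \<le> I (rv_add X1 Z) w" using Y(4) by eventually_elim simp
  then show ?thesis using Y(1,2) Y'D ae2 by (intro MI_I)
qed

lemma rho_zero: "AE w in M. rho (\<lambda>_. 0) w = 0"
proof -
  have le: "AE w in M. rho (\<lambda>_. 0) w \<le> 0" using rho_lb[OF zero_MI] .
  have "AE w in M. (\<lambda>_. 0) w \<le> rho (\<lambda>_. 0) w"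
  proof (rule rho_glb)
    show "(\<lambda>_. 0::ereal) \<in> borel_measurable M" by simp
  next
    fix Z assume Z: "Z \<in> MI (\<lambda>_. 0)"
    then obtain Y where Y: "Z \<in> borel_measurable H" "AE w in M. Z w \<in> ereal_reals" "Y \<in> D"
      "AE w in M. 0 \<le> I Y w" "AE w in M. Z w = eminus (Y w) 0" by (rule MI_E)
    have ae: "AE w in M. Y w = Z w" using Y(5) by eventually_elim simp
    have ZD: "Z \<in> D" using D_ae[OF Y(3) measH[OF Y(1)] ae] .
    have "AE w in M. I Y w = I Z w" using I_cong[OF Y(3) ZD ae] .
    then show "AE w in M. (\<lambda>_. 0) w \<le> Z w" using I_Hle[OF ZD Y(1)] Y(4)
      by eventually_elim simp
  qed
  with le show ?thesis by eventually_elim simp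
qed

lemma rho_mono:
  assumes X1: "X1 \<in> Dom" and X2: "X2 \<in> Dom" and le: "AE w in M. X2 w \<le> X1 w"
  shows "AE w in M. rho X1 w \<le> rho X2 w"
proof (rule rho_glb[OF rho_meas])
  fix Z assume "Z \<in> MI X2"
  then have "Z \<in> MI X1" using MI_mono[OF X1 Dom_E(2)[OF X2] le] by blast
  then show "AE w in M. rho X1 w \<le> Z w" by (rule rho_lb)
qed

lemma rho_cash:
  assumes X: "X \<in> Dom" and A: "A \<in> L0 M H ereal_reals"
  shows "AE w in M. rho (rv_add X A) w = rv_sub (rho X) A w"
proof -
  have Am[measurable]: "A \<in> borel_measurable H" and Ar: "AE w in M. A w \<in> ereal_reals" using A by (auto simp: L0_iff)
  have AM[measurable]: "A \<in> borel_measurable M" using measH[OF Am] .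
  note Xr = Dom_E(2)[OF X]
  have ae1: "AE w in M. rv_add (rho (rv_add X A)) A w \<le> rho X w"
  proof (rule rho_glb)
    show "rv_add (rho (rv_add X A)) A \<in> borel_measurable M" by measurable
  next
    fix Z assume Z: "Z \<in> MI X"
    have "AE w in M. rho (rv_add X A) w \<le> rv_sub Z A w" using rho_lb[OF MI_shift[OF Z Xr Am Ar]] .
    moreover have "AE w in M. Z w \<in> ereal_reals" using Z unfolding MI_iff by blast
    ultimately show "AE w in M. rv_add (rho (rv_add X A)) A w \<le> Z w" using Ar
    proof eventually_elim
      case (elim w)
      from elim(2) obtain z where z: "Z w = ereal z" by (rule realE)
      from elim(3) obtain a where a: "A w = ereal a" by (rule realE)
      show ?case using elim(1) z a by (simp add: rv_add_def rv_sub_def pwc1)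
    qed
  qed
  have ae2: "AE w in M. rv_sub (rho X) A w \<le> rho (rv_add X A) w"
  proof (rule rho_glb)
    show "rv_sub (rho X) A \<in> borel_measurable M" by measurable
  next
    fix Z assume Z: "Z \<in> MI (rv_add X A)"
    have "AE w in M. rho X w \<le> rv_add Z A w" using rho_lb[OF MI_unshift[OF Z Xr Am Ar]] .
    moreover have "AE w in M. Z w \<in> ereal_reals" using Z unfolding MI_iff by blast
    ultimately show "AE w in M. rv_sub (rho X) A w \<le> Z w" using Ar
    proof eventually_elim
      case (elim w)
      from elim(2) obtain z where z: "Z w = ereal z" by (rule realE)
      from elim(3) obtain a where a: "A w = ereal a" by (rule realE)
      show ?case using elim(1) z a by (simp add: rv_add_def rv_sub_def pwc2)
    qed
  qed
  show ?thesis using ae1 ae2 Ar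
  proof eventually_elim
    case (elim w)
    from elim(3) obtain a where a: "A w = ereal a" by (rule realE)
    show ?case using elim(1,2) a pwc3 by (simp add: rv_add_def rv_sub_def)
  qed
qed

lemma risk_measure: "cond_risk_measure M H Dom rho"
  unfolding cond_risk_measure_def
proof (intro conjI ballI allI impI)
  show "Dom \<subseteq> L0 M M ereal_reals" by (auto simp: Dom_rho_I_def)
  show "(\<lambda>_. 0) \<in> Dom" by (rule zero_Dom)
  show "ae_closed M Dom" unfolding ae_closed_def ae_eq_def using Dom_closed by blast
  show "rv_add X A \<in> Dom" if "X \<in> Dom" "A \<in> L0 M H ereal_reals" for X A using add_Dom that .
  show "rho X \<in> L0 M H UNIV" if "X \<in> Dom" for X using rho_H[OF that] by (simp add: L0_iff)
  show "ae_eq M (rho (\<lambda>_. 0)) (\<lambda>_. 0)" unfolding ae_eq_def using rho_zero by simp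
  show "ae_le M (rho X1) (rho X2)" if "X1 \<in> Dom" "X2 \<in> Dom" "ae_le M X2 X1" for X1 X2
    using rho_mono that unfolding ae_le_def by blast
  show "ae_eq M (rho (rv_add X A)) (rv_sub (rho X) A)" if "X \<in> Dom" "A \<in> L0 M H ereal_reals" for X A
    using rho_cash[OF that] unfolding ae_eq_def .
qed

end

lemma eplus_nonneg: "0 \<le> p \<Longrightarrow> 0 \<le> q \<Longrightarrow> 0 \<le> eplus p q"
  by (cases p; cases q) (auto simp: eplus_def)

context setting begin

lemma comb_MI:
  assumes HC: "H_convex M H DP" and X1: "X1 \<in> Dom" and X2: "X2 \<in> Dom" and A: "A \<in> L0 M H ereal_unit"
    and Z1: "Z1 \<in> MI X1" and Z2: "Z2 \<in> MI X2"
  shows "rv_comb A Z1 Z2 \<in> MI (rv_comb A X1 X2)"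
proof -
  have Am[measurable]: "A \<in> borel_measurable H" and Au: "AE w in M. A w \<in> ereal_unit" using A by (auto simp: L0_iff)
  from Z1 obtain Y1 where Y1: "Z1 \<in> borel_measurable H" "AE w in M. Z1 w \<in> ereal_reals" "Y1 \<in> D"
    "AE w in M. 0 \<le> I Y1 w" "AE w in M. Z1 w = eminus (Y1 w) (X1 w)" by (rule MI_E)
  from Z2 obtain Y2 where Y2: "Z2 \<in> borel_measurable H" "AE w in M. Z2 w \<in> ereal_reals" "Y2 \<in> D"
    "AE w in M. 0 \<le> I Y2 w" "AE w in M. Z2 w = eminus (Y2 w) (X2 w)" by (rule MI_E)
  have "Y1 \<in> DP" "Y2 \<in> DP" using Y1 Y2 by (auto simp: DP_iff)
  then have YC: "rv_comb A Y1 Y2 \<in> DP" using HC A unfolding H_convex_def by blast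
  have m: "rv_comb A Z1 Z2 \<in> borel_measurable H" using Y1(1) Y2(1) by measurable
  have "AE w in M. rv_comb A Z1 Z2 w \<in> ereal_reals \<and> rv_comb A Z1 Z2 w = eminus (rv_comb A Y1 Y2 w) (rv_comb A X1 X2 w)"
    using Y1(2) Y1(5) Y2(2) Y2(5) Dom_E(2)[OF X1] Dom_E(2)[OF X2] Au
  proof eventually_elim
    case (elim w)
    from elim(1) obtain z1 where z1: "Z1 w = ereal z1" by (rule realE)
    from elim(3) obtain z2 where z2: "Z2 w = ereal z2" by (rule realE)
    from elim(5) obtain x1 where x1: "X1 w = ereal x1" by (rule realE)
    from elim(6) obtain x2 where x2: "X2 w = ereal x2" by (rule realE)
    from elim(7) obtain a where a: "A w = ereal a" "0 \<le> a" "a \<le> 1" by (auto simp: ereal_unit_iff)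
    have y1: "Y1 w = ereal (x1 + z1)" using elim(2) z1 x1 by (intro eminus_realD) simp
    have y2: "Y2 w = ereal (x2 + z2)" using elim(4) z2 x2 by (intro eminus_realD) simp
    show ?case using z1 z2 x1 x2 a y1 y2
      by (simp add: rv_comb_def rv_add_def rv_mul_def ereal_reals_def one_ereal_def algebra_simps)
  qed
  then show ?thesis using m YC unfolding DP_iff by (intro MI_I[where Y="rv_comb A Y1 Y2"]) (auto elim: eventually_mono)
qed

lemma comb_Dom:
  assumes HC: "H_convex M H DP" and X1: "X1 \<in> Dom" and X2: "X2 \<in> Dom" and A: "A \<in> L0 M H ereal_unit"
  shows "rv_comb A X1 X2 \<in> Dom"
proof -
  have Am[measurable]: "A \<in> borel_measurable H" and Au: "AE w in M. A w \<in> ereal_unit" using A by (auto simp: L0_iff)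
  have AM[measurable]: "A \<in> borel_measurable M" using measH[OF Am] .
  have [measurable]: "X1 \<in> borel_measurable M" "X2 \<in> borel_measurable M" using Dom_E(1) X1 X2 by auto
  from Dom_E(3)[OF X1] obtain Z1 where Z1: "Z1 \<in> MI X1" by blast
  from Dom_E(3)[OF X2] obtain Z2 where Z2: "Z2 \<in> MI X2" by blast
  have "rv_comb A Z1 Z2 \<in> MI (rv_comb A X1 X2)" using comb_MI[OF HC X1 X2 A Z1 Z2] .
  moreover have "rv_comb A X1 X2 \<in> borel_measurable M" by measurable
  moreover have "AE w in M. rv_comb A X1 X2 w \<in> ereal_reals" using Dom_E(2)[OF X1] Dom_E(2)[OF X2] Au
  proof eventually_elim
    case (elim w)
    from elim(1) obtain x1 where x1: "X1 w = ereal x1" by (rule realE)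
    from elim(2) obtain x2 where x2: "X2 w = ereal x2" by (rule realE)
    from elim(3) obtain a where a: "A w = ereal a" by (auto simp: ereal_unit_iff)
    show ?case using x1 x2 a by (simp add: rv_comb_def rv_add_def rv_mul_def ereal_reals_iff one_ereal_def)
  qed
  ultimately show ?thesis unfolding Dom_iff by blast
qed

lemma rho_conv:
  assumes HC: "H_convex M H DP" and X1: "X1 \<in> Dom" and X2: "X2 \<in> Dom" and A: "A \<in> L0 M H ereal_unit"
  shows "AE w in M. rho (rv_comb A X1 X2) w \<le> rv_comb A (rho X1) (rho X2) w"
proof -
  have Au: "AE w in M. A w \<in> ereal_unit" using A by (auto simp: L0_iff)
  obtain g1 :: "nat \<Rightarrow> 'a \<Rightarrow> ereal" where g1: "range g1 \<subseteq> MI X1" "AE w in M. rho X1 w = (INF n. g1 n w)"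
    using rho_seq[OF X1] by blast
  obtain g2 :: "nat \<Rightarrow> 'a \<Rightarrow> ereal" where g2: "range g2 \<subseteq> MI X2" "AE w in M. rho X2 w = (INF n. g2 n w)"
    using rho_seq[OF X2] by blast
  have "AE w in M. rho (rv_comb A X1 X2) w \<le> rv_comb A (g1 n) (g2 m) w" for n m
    using rho_lb[OF comb_MI[OF HC X1 X2 A range_subsetD[OF g1(1)] range_subsetD[OF g2(1)]]] .
  then have ae1: "AE w in M. \<forall>n m. rho (rv_comb A X1 X2) w \<le> rv_comb A (g1 n) (g2 m) w"
    by (simp add: AE_all_countable)
  have "AE w in M. g1 n w \<in> ereal_reals" for n using range_subsetD[OF g1(1)] unfolding MI_iff by blast
  then have ae2: "AE w in M. \<forall>n. g1 n w \<in> ereal_reals" by (simp add: AE_all_countable)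
  have "AE w in M. g2 n w \<in> ereal_reals" for n using range_subsetD[OF g2(1)] unfolding MI_iff by blast
  then have ae3: "AE w in M. \<forall>n. g2 n w \<in> ereal_reals" by (simp add: AE_all_countable)
  show ?thesis using ae1 ae2 ae3 g1(2) g2(2) Au
  proof eventually_elim
    case (elim w)
    from elim(6) obtain a where a: "A w = ereal a" "0 \<le> a" "a \<le> 1" by (auto simp: ereal_unit_iff)
    define u where "u n = real_of_ereal (g1 n w)" for n
    define v where "v n = real_of_ereal (g2 n w)" for n
    have u: "g1 n w = ereal (u n)" for n using elim(2) ereal_reals_real unfolding u_def by metis
    have v: "g2 n w = ereal (v n)" for n using elim(3) ereal_reals_real unfolding v_def by metis
    have h: "rho (rv_comb A X1 X2) w \<le> ereal (a * u n + (1 - a) * v m)" for n m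
      using elim(1) u v a by (simp add: rv_comb_def rv_add_def rv_mul_def one_ereal_def)
    have "rho (rv_comb A X1 X2) w \<le> eplus (ereal a * (INF n. ereal (u n))) ((1 - ereal a) * (INF m. ereal (v m)))"
      by (rule pw_conv[OF a(2,3) h])
    then show ?case using elim(4,5) u v a by (simp add: rv_comb_def rv_add_def rv_mul_def)
  qed
qed

lemma convex_part: "H_convex M H DP \<Longrightarrow> cond_convex_rm M H Dom rho"
  unfolding cond_convex_rm_def H_convex_def[of M H Dom]
  using comb_Dom rho_conv unfolding ae_le_def by blast

lemma sum_MI:
  assumes SA: "superadditive_indicator M D I" and Z1: "Z1 \<in> MI X1" and Z2: "Z2 \<in> MI X2"
    and X1: "X1 \<in> Dom" and X2: "X2 \<in> Dom"
  shows "rv_add Z1 Z2 \<in> MI (rv_add X1 X2)"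
proof -
  from Z1 obtain Y1 where Y1: "Z1 \<in> borel_measurable H" "AE w in M. Z1 w \<in> ereal_reals" "Y1 \<in> D"
    "AE w in M. 0 \<le> I Y1 w" "AE w in M. Z1 w = eminus (Y1 w) (X1 w)" by (rule MI_E)
  from Z2 obtain Y2 where Y2: "Z2 \<in> borel_measurable H" "AE w in M. Z2 w \<in> ereal_reals" "Y2 \<in> D"
    "AE w in M. 0 \<le> I Y2 w" "AE w in M. Z2 w = eminus (Y2 w) (X2 w)" by (rule MI_E)
  have YD: "rv_add Y1 Y2 \<in> D" and Ile: "AE w in M. rv_add (I Y1) (I Y2) w \<le> I (rv_add Y1 Y2) w"
    using SA Y1(3) Y2(3) unfolding superadditive_indicator_def ae_le_def by blast+
  have I0: "AE w in M. 0 \<le> I (rv_add Y1 Y2) w" using Ile Y1(4) Y2(4)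
  proof eventually_elim
    case (elim w)
    have "0 \<le> eplus (I Y1 w) (I Y2 w)" using elim(2,3) by (rule eplus_nonneg)
    then show ?case using elim(1) unfolding rv_add_def by simp
  qed
  have m: "rv_add Z1 Z2 \<in> borel_measurable H" using Y1(1) Y2(1) by measurable
  have "AE w in M. rv_add Z1 Z2 w \<in> ereal_reals \<and> rv_add Z1 Z2 w = eminus (rv_add Y1 Y2 w) (rv_add X1 X2 w)"
    using Y1(2) Y1(5) Y2(2) Y2(5) Dom_E(2)[OF X1] Dom_E(2)[OF X2]
  proof eventually_elim
    case (elim w)
    from elim(1) obtain z1 where z1: "Z1 w = ereal z1" by (rule realE)
    from elim(3) obtain z2 where z2: "Z2 w = ereal z2" by (rule realE)
    from elim(5) obtain x1 where x1: "X1 w = ereal x1" by (rule realE)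
    from elim(6) obtain x2 where x2: "X2 w = ereal x2" by (rule realE)
    have y1: "Y1 w = ereal (x1 + z1)" using elim(2) z1 x1 by (intro eminus_realD) simp
    have y2: "Y2 w = ereal (x2 + z2)" using elim(4) z2 x2 by (intro eminus_realD) simp
    show ?case using z1 z2 x1 x2 y1 y2 by (simp add: rv_add_def ereal_reals_iff algebra_simps)
  qed
  then show ?thesis using m YD I0 by (intro MI_I[where Y="rv_add Y1 Y2"]) (auto elim: eventually_mono)
qed

lemma sum_Dom:
  assumes SA: "superadditive_indicator M D I" and X1: "X1 \<in> Dom" and X2: "X2 \<in> Dom"
  shows "rv_add X1 X2 \<in> Dom"
proof -
  have [measurable]: "X1 \<in> borel_measurable M" "X2 \<in> borel_measurable M" using Dom_E(1) X1 X2 by auto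
  from Dom_E(3)[OF X1] obtain Z1 where Z1: "Z1 \<in> MI X1" by blast
  from Dom_E(3)[OF X2] obtain Z2 where Z2: "Z2 \<in> MI X2" by blast
  have "rv_add Z1 Z2 \<in> MI (rv_add X1 X2)" using sum_MI[OF SA Z1 Z2 X1 X2] .
  moreover have "rv_add X1 X2 \<in> borel_measurable M" by measurable
  moreover have "AE w in M. rv_add X1 X2 w \<in> ereal_reals" using Dom_E(2)[OF X1] Dom_E(2)[OF X2]
    by eventually_elim (auto simp: ereal_reals_iff rv_add_def)
  ultimately show ?thesis unfolding Dom_iff by blast
qed

lemma rho_sub:
  assumes SA: "superadditive_indicator M D I" and X1: "X1 \<in> Dom" and X2: "X2 \<in> Dom"
  shows "AE w in M. rho (rv_add X1 X2) w \<le> rv_add (rho X1) (rho X2) w"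
proof -
  obtain g1 :: "nat \<Rightarrow> 'a \<Rightarrow> ereal" where g1: "range g1 \<subseteq> MI X1" "AE w in M. rho X1 w = (INF n. g1 n w)"
    using rho_seq[OF X1] by blast
  obtain g2 :: "nat \<Rightarrow> 'a \<Rightarrow> ereal" where g2: "range g2 \<subseteq> MI X2" "AE w in M. rho X2 w = (INF n. g2 n w)"
    using rho_seq[OF X2] by blast
  have "AE w in M. rho (rv_add X1 X2) w \<le> rv_add (g1 n) (g2 m) w" for n m
    using rho_lb[OF sum_MI[OF SA range_subsetD[OF g1(1)] range_subsetD[OF g2(1)] X1 X2]] .
  then have ae1: "AE w in M. \<forall>n m. rho (rv_add X1 X2) w \<le> rv_add (g1 n) (g2 m) w"
    by (simp add: AE_all_countable)
  have "AE w in M. g1 n w \<in> ereal_reals" for n using range_subsetD[OF g1(1)] unfolding MI_iff by blast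
  then have ae2: "AE w in M. \<forall>n. g1 n w \<in> ereal_reals" by (simp add: AE_all_countable)
  have "AE w in M. g2 n w \<in> ereal_reals" for n using range_subsetD[OF g2(1)] unfolding MI_iff by blast
  then have ae3: "AE w in M. \<forall>n. g2 n w \<in> ereal_reals" by (simp add: AE_all_countable)
  show ?thesis using ae1 ae2 ae3 g1(2) g2(2)
  proof eventually_elim
    case (elim w)
    define u where "u n = real_of_ereal (g1 n w)" for n
    define v where "v n = real_of_ereal (g2 n w)" for n
    have u: "g1 n w = ereal (u n)" for n using elim(2) ereal_reals_real unfolding u_def by metis
    have v: "g2 n w = ereal (v n)" for n using elim(3) ereal_reals_real unfolding v_def by metis
    have h: "rho (rv_add X1 X2) w \<le> ereal (u n + v m)" for n m
      using elim(1) u v by (simp add: rv_add_def)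
    have "rho (rv_add X1 X2) w \<le> eplus (INF n. ereal (u n)) (INF m. ereal (v m))"
      by (rule pw_add[OF h])
    then show ?case using elim(4,5) u v by (simp add: rv_add_def)
  qed
qed

lemma subadd_part: "superadditive_indicator M D I \<Longrightarrow> subadditive_rm M Dom rho"
  unfolding subadditive_rm_def using sum_Dom rho_sub unfolding ae_le_def by blast

end

lemma ereal_mult_nonneg': "0 \<le> (a::ereal) \<Longrightarrow> 0 \<le> b \<Longrightarrow> 0 \<le> a * b"
  by (cases a; cases b) auto

lemma pw_h1: "0 < a \<Longrightarrow> r \<le> ereal (1 / a * z) \<Longrightarrow> ereal a * r \<le> ereal z"
  by (cases r) (auto simp: pos_le_divide_eq mult.commute)

definition bet :: "('a \<Rightarrow> ereal) \<Rightarrow> 'a \<Rightarrow> ereal" where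
  "bet A = (\<lambda>w. if A w = 0 then 1 else 0)"
definition gam :: "('a \<Rightarrow> ereal) \<Rightarrow> 'a \<Rightarrow> ereal" where
  "gam A = (\<lambda>w. if A w = 0 then 0 else 1)"
definition ainv :: "('a \<Rightarrow> ereal) \<Rightarrow> 'a \<Rightarrow> ereal" where
  "ainv A = (\<lambda>w. if A w = 0 then 0 else ereal (1 / real_of_ereal (A w)))"

lemma bet_meas[measurable]: "A \<in> borel_measurable N \<Longrightarrow> bet A \<in> borel_measurable N"
  unfolding bet_def by measurable
lemma gam_meas[measurable]: "A \<in> borel_measurable N \<Longrightarrow> gam A \<in> borel_measurable N"
  unfolding gam_def by measurable
lemma ainv_meas[measurable]:
  assumes [measurable]: "A \<in> borel_measurable N" shows "ainv A \<in> borel_measurable N"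
proof -
  have "A -` {0} \<inter> space N \<in> sets N" by (rule measurable_sets[OF assms]) simp
  then have [measurable]: "{w \<in> space N. A w = 0} \<in> sets N" by (simp add: vimage_def Int_def conj_commute)
  show ?thesis unfolding ainv_def by measurable
qed

lemma bet_L0: "A \<in> L0 M H ereal_nonneg_reals \<Longrightarrow> bet A \<in> L0 M H ereal_nonneg_reals"
  by (auto simp: L0_iff bet_def ereal_nonneg_reals_def)
lemma gam_L0: "A \<in> L0 M H ereal_nonneg_reals \<Longrightarrow> gam A \<in> L0 M H ereal_nonneg_reals"
  by (auto simp: L0_iff gam_def ereal_nonneg_reals_def)
lemma ainv_L0:
  assumes "A \<in> L0 M H ereal_nonneg_reals" shows "ainv A \<in> L0 M H ereal_nonneg_reals"
proof -
  have m: "A \<in> borel_measurable H" and ae: "AE w in M. A w \<in> ereal_nonneg_reals" using assms by (auto simp: L0_iff)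
  have "AE w in M. ainv A w \<in> ereal_nonneg_reals" using ae
  proof eventually_elim
    case (elim w)
    then obtain a where "A w = ereal a" "0 \<le> a" by (auto simp: ereal_nonneg_iff)
    then show ?case by (auto simp: ainv_def ereal_nonneg_iff)
  qed
  then show ?thesis using m by (simp add: L0_iff)
qed

context setting begin

lemma PH_D: "pos_homogeneous_indicator M H D I \<Longrightarrow> A \<in> L0 M H ereal_nonneg_reals \<Longrightarrow> X \<in> D \<Longrightarrow> rv_mul A X \<in> D"
  unfolding pos_homogeneous_indicator_def by blast
lemma PH_I: "pos_homogeneous_indicator M H D I \<Longrightarrow> A \<in> L0 M H ereal_nonneg_reals \<Longrightarrow> X \<in> D \<Longrightarrow>
    AE w in M. I (rv_mul A X) w = A w * I X w"
  unfolding pos_homogeneous_indicator_def ae_eq_def by (auto simp: rv_mul_def)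

lemma mul_MI:
  assumes PH: "pos_homogeneous_indicator M H D I" and A: "A \<in> L0 M H ereal_nonneg_reals"
    and X: "X \<in> Dom" and Z: "Z \<in> MI X"
  shows "rv_mul A Z \<in> MI (rv_mul A X)"
proof -
  have Am[measurable]: "A \<in> borel_measurable H" and An: "AE w in M. A w \<in> ereal_nonneg_reals" using A by (auto simp: L0_iff)
  from Z obtain Y where Y: "Z \<in> borel_measurable H" "AE w in M. Z w \<in> ereal_reals" "Y \<in> D"
    "AE w in M. 0 \<le> I Y w" "AE w in M. Z w = eminus (Y w) (X w)" by (rule MI_E)
  have YD: "rv_mul A Y \<in> D" using PH_D[OF PH A Y(3)] .
  have "AE w in M. 0 \<le> I (rv_mul A Y) w" using PH_I[OF PH A Y(3)] Y(4) An
  proof eventually_elim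
    case (elim w)
    then show ?case by (auto simp: ereal_nonneg_iff intro!: ereal_mult_nonneg')
  qed
  moreover have m: "rv_mul A Z \<in> borel_measurable H" using Y(1) by measurable
  moreover have "AE w in M. rv_mul A Z w \<in> ereal_reals \<and> rv_mul A Z w = eminus (rv_mul A Y w) (rv_mul A X w)"
    using Y(2) Y(5) Dom_E(2)[OF X] An
  proof eventually_elim
    case (elim w)
    from elim(1) obtain z where z: "Z w = ereal z" by (rule realE)
    from elim(3) obtain x where x: "X w = ereal x" by (rule realE)
    from elim(4) obtain a where a: "A w = ereal a" by (auto simp: ereal_nonneg_iff)
    have y: "Y w = ereal (x + z)" using elim(2) z x by (intro eminus_realD) simp
    show ?case using z x a y by (simp add: rv_mul_def ereal_reals_def algebra_simps)
  qed
  ultimately show ?thesis using YD by (intro MI_I[where Y="rv_mul A Y"]) (auto elim: eventually_mono)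
qed

lemma mul_Dom:
  assumes PH: "pos_homogeneous_indicator M H D I" and A: "A \<in> L0 M H ereal_nonneg_reals"
    and X: "X \<in> Dom"
  shows "rv_mul A X \<in> Dom"
proof -
  have Am[measurable]: "A \<in> borel_measurable H" and An: "AE w in M. A w \<in> ereal_nonneg_reals" using A by (auto simp: L0_iff)
  have [measurable]: "A \<in> borel_measurable M" using measH[OF Am] .
  have [measurable]: "X \<in> borel_measurable M" using Dom_E(1)[OF X] .
  from Dom_E(3)[OF X] obtain Z where Z: "Z \<in> MI X" by blast
  have "rv_mul A Z \<in> MI (rv_mul A X)" using mul_MI[OF PH A X Z] .
  moreover have "rv_mul A X \<in> borel_measurable M" by measurable
  moreover have "AE w in M. rv_mul A X w \<in> ereal_reals" using Dom_E(2)[OF X] An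
    by eventually_elim (auto simp: ereal_reals_iff ereal_nonneg_iff rv_mul_def)
  ultimately show ?thesis unfolding Dom_iff by blast
qed

lemma zero_part:
  assumes PH: "pos_homogeneous_indicator M H D I" and A: "A \<in> L0 M H ereal_nonneg_reals"
    and X: "X \<in> Dom" and Z: "Z \<in> MI (rv_mul A X)"
  shows "AE w in M. A w = 0 \<longrightarrow> 0 \<le> Z w"
proof -
  have Am[measurable]: "A \<in> borel_measurable H" and An: "AE w in M. A w \<in> ereal_nonneg_reals" using A by (auto simp: L0_iff)
  from Z obtain Y where Y: "Z \<in> borel_measurable H" "AE w in M. Z w \<in> ereal_reals" "Y \<in> D"
    "AE w in M. 0 \<le> I Y w" "AE w in M. Z w = eminus (Y w) (rv_mul A X w)" by (rule MI_E)
  have [measurable]: "Z \<in> borel_measurable H" using Y(1) .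
  have B: "bet A \<in> L0 M H ereal_nonneg_reals" using bet_L0[OF A] .
  have BYD: "rv_mul (bet A) Y \<in> D" using PH_D[OF PH B Y(3)] .
  have BZm: "rv_mul (bet A) Z \<in> borel_measurable H" by measurable
  have ae: "AE w in M. rv_mul (bet A) Y w = rv_mul (bet A) Z w" using Y(5) Dom_E(2)[OF X]
  proof eventually_elim
    case (elim w)
    from elim(2) obtain x where x: "X w = ereal x" by (rule realE)
    show ?case
    proof (cases "A w = 0")
      case True
      then have "Z w = Y w" using elim(1) x by (simp add: rv_mul_def)
      then show ?thesis using True by (simp add: rv_mul_def bet_def)
    next
      case False then show ?thesis by (simp add: rv_mul_def bet_def)
    qed
  qed
  have BZD: "rv_mul (bet A) Z \<in> D" using D_ae[OF BYD measH[OF BZm] ae] .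
  have "AE w in M. I (rv_mul (bet A) Y) w = I (rv_mul (bet A) Z) w" using I_cong[OF BYD BZD ae] .
  then show ?thesis using I_Hle[OF BZD BZm] PH_I[OF PH B Y(3)] Y(4)
  proof eventually_elim
    case (elim w)
    show ?case
    proof
      assume "A w = 0"
      then show "0 \<le> Z w" using elim by (simp add: rv_mul_def bet_def)
    qed
  qed
qed

lemma glue_MI:
  assumes PH: "pos_homogeneous_indicator M H D I" and A: "A \<in> L0 M H ereal_nonneg_reals"
    and X: "X \<in> Dom" and Z: "Z \<in> MI (rv_mul A X)" and Z0: "Z0 \<in> MI X"
  shows "(\<lambda>w. if A w = 0 then Z0 w else ainv A w * Z w) \<in> MI X"
proof -
  define Wz where "Wz = (\<lambda>w. if A w = 0 then Z0 w else ainv A w * Z w)"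
  have Am[measurable]: "A \<in> borel_measurable H" and An: "AE w in M. A w \<in> ereal_nonneg_reals" using A by (auto simp: L0_iff)
  from Z obtain Y' where Y': "Z \<in> borel_measurable H" "AE w in M. Z w \<in> ereal_reals" "Y' \<in> D"
    "AE w in M. 0 \<le> I Y' w" "AE w in M. Z w = eminus (Y' w) (rv_mul A X w)" by (rule MI_E)
  from Z0 obtain Y0 where Y0: "Z0 \<in> borel_measurable H" "AE w in M. Z0 w \<in> ereal_reals" "Y0 \<in> D"
    "AE w in M. 0 \<le> I Y0 w" "AE w in M. Z0 w = eminus (Y0 w) (X w)" by (rule MI_E)
  have [measurable]: "Z \<in> borel_measurable H" "Z0 \<in> borel_measurable H" using Y'(1) Y0(1) by auto
  have Wm: "Wz \<in> borel_measurable H" unfolding Wz_def by measurable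
  define Yn where "Yn = rv_add X Wz"
  have YnD: "Yn \<in> D" unfolding Yn_def using Dom_D[OF X] Wm by (rule D_add)
  have G: "gam A \<in> L0 M H ereal_nonneg_reals" using gam_L0[OF A] .
  have Ai: "ainv A \<in> L0 M H ereal_nonneg_reals" using ainv_L0[OF A] .
  have B: "bet A \<in> L0 M H ereal_nonneg_reals" using bet_L0[OF A] .
  have D1: "rv_mul (gam A) Yn \<in> D" using PH_D[OF PH G YnD] .
  have D2: "rv_mul (ainv A) Y' \<in> D" using PH_D[OF PH Ai Y'(3)] .
  have D3: "rv_mul (bet A) Yn \<in> D" using PH_D[OF PH B YnD] .
  have D4: "rv_mul (bet A) Y0 \<in> D" using PH_D[OF PH B Y0(3)] .
  have pt: "AE w in M. rv_mul (gam A) Yn w = rv_mul (ainv A) Y' w \<and> rv_mul (bet A) Yn w = rv_mul (bet A) Y0 w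
      \<and> Wz w \<in> ereal_reals \<and> Wz w = eminus (Yn w) (X w) \<and> 0 \<le> ainv A w"
    using Y'(2) Y'(5) Y0(2) Y0(5) Dom_E(2)[OF X] An
  proof eventually_elim
    case (elim w)
    from elim(1) obtain z where z: "Z w = ereal z" by (rule realE)
    from elim(3) obtain z0 where z0: "Z0 w = ereal z0" by (rule realE)
    from elim(5) obtain x where x: "X w = ereal x" by (rule realE)
    from elim(6) obtain a where a: "A w = ereal a" "0 \<le> a" by (auto simp: ereal_nonneg_iff)
    have y': "Y' w = ereal (a * x + z)" using elim(2) z x a by (intro eminus_realD) (simp add: rv_mul_def)
    have y0: "Y0 w = ereal (x + z0)" using elim(4) z0 x by (intro eminus_realD) simp
    show ?case
    proof (cases "a = 0")
      case True
      then show ?thesis using z z0 x a y' y0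
        by (simp add: rv_mul_def rv_add_def Yn_def Wz_def gam_def bet_def ainv_def ereal_reals_def)
    next
      case False
      then show ?thesis using z z0 x a y' y0
        by (simp add: rv_mul_def rv_add_def Yn_def Wz_def gam_def bet_def ainv_def ereal_reals_def field_simps)
    qed
  qed
  have c1: "AE w in M. rv_mul (gam A) Yn w = rv_mul (ainv A) Y' w" using pt by (auto elim: eventually_mono)
  have c2: "AE w in M. rv_mul (bet A) Yn w = rv_mul (bet A) Y0 w" using pt by (auto elim: eventually_mono)
  have I0: "AE w in M. 0 \<le> I Yn w"
    using I_cong[OF D1 D2 c1] I_cong[OF D3 D4 c2] PH_I[OF PH G YnD] PH_I[OF PH Ai Y'(3)]
      PH_I[OF PH B YnD] PH_I[OF PH B Y0(3)] Y'(4) Y0(4) pt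
  proof eventually_elim
    case (elim w)
    show ?case
    proof (cases "A w = 0")
      case True
      then have "I Yn w = I Y0 w" using elim(2,5,6) by (simp add: bet_def)
      then show ?thesis using elim(8) by simp
    next
      case False
      then have "I Yn w = ainv A w * I Y' w" using elim(1,3,4) by (simp add: gam_def)
      then show ?thesis using elim(7,9) by (simp add: ereal_mult_nonneg')
    qed
  qed
  have "Wz \<in> MI X"
    using Wm YnD I0 pt by (intro MI_I[where Y=Yn]) (auto elim: eventually_mono)
  then show ?thesis unfolding Wz_def .
qed

lemma rho_hom_lower:
  assumes PH: "pos_homogeneous_indicator M H D I" and A: "A \<in> L0 M H ereal_nonneg_reals"
    and X: "X \<in> Dom"
  shows "AE w in M. rv_mul A (rho X) w \<le> rho (rv_mul A X) w"
proof (rule rho_glb)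
  have Am[measurable]: "A \<in> borel_measurable H" using A by (auto simp: L0_iff)
  have [measurable]: "A \<in> borel_measurable M" using measH[OF Am] .
  show "rv_mul A (rho X) \<in> borel_measurable M" by measurable
next
  fix Z assume Z: "Z \<in> MI (rv_mul A X)"
  have An: "AE w in M. A w \<in> ereal_nonneg_reals" using A by (auto simp: L0_iff)
  from Dom_E(3)[OF X] obtain Z0 where Z0: "Z0 \<in> MI X" by blast
  have "AE w in M. rho X w \<le> (\<lambda>w. if A w = 0 then Z0 w else ainv A w * Z w) w"
    using rho_lb[OF glue_MI[OF PH A X Z Z0]] .
  moreover have "AE w in M. Z w \<in> ereal_reals" using Z unfolding MI_iff by blast
  ultimately show "AE w in M. rv_mul A (rho X) w \<le> Z w" using zero_part[OF PH A X Z] An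
  proof eventually_elim
    case (elim w)
    from elim(2) obtain z where z: "Z w = ereal z" by (rule realE)
    from elim(4) obtain a where a: "A w = ereal a" "0 \<le> a" by (auto simp: ereal_nonneg_iff)
    show ?case
    proof (cases "a = 0")
      case True then show ?thesis using elim(3) a by (simp add: rv_mul_def zero_ereal_def[symmetric])
    next
      case False
      then have "rho X w \<le> ereal (1 / a * z)" using elim(1) a z by (simp add: ainv_def)
      then show ?thesis using pw_h1[of a "rho X w" z] False a z by (simp add: rv_mul_def)
    qed
  qed
qed

lemma rho_hom_upper:
  assumes PH: "pos_homogeneous_indicator M H D I" and A: "A \<in> L0 M H ereal_nonneg_reals"
    and X: "X \<in> Dom"
  shows "AE w in M. rho (rv_mul A X) w \<le> rv_mul A (rho X) w"
proof -
  have An: "AE w in M. A w \<in> ereal_nonneg_reals" using A by (auto simp: L0_iff)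
  obtain g :: "nat \<Rightarrow> 'a \<Rightarrow> ereal" where g: "range g \<subseteq> MI X" "AE w in M. rho X w = (INF n. g n w)"
    using rho_seq[OF X] by blast
  have "AE w in M. rho (rv_mul A X) w \<le> rv_mul A (g n) w" for n
    using rho_lb[OF mul_MI[OF PH A X range_subsetD[OF g(1)]]] .
  then have ae1: "AE w in M. \<forall>n. rho (rv_mul A X) w \<le> rv_mul A (g n) w"
    by (simp add: AE_all_countable)
  have "AE w in M. g n w \<in> ereal_reals" for n using range_subsetD[OF g(1)] unfolding MI_iff by blast
  then have ae2: "AE w in M. \<forall>n. g n w \<in> ereal_reals" by (simp add: AE_all_countable)
  show ?thesis using ae1 ae2 g(2) An
  proof eventually_elim
    case (elim w)
    from elim(4) obtain a where a: "A w = ereal a" "0 \<le> a" by (auto simp: ereal_nonneg_iff)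
    define u where "u n = real_of_ereal (g n w)" for n
    have u: "g n w = ereal (u n)" for n using elim(2) ereal_reals_real unfolding u_def by metis
    have h: "rho (rv_mul A X) w \<le> ereal (a * u n)" for n
      using elim(1) u a by (simp add: rv_mul_def)
    have "rho (rv_mul A X) w \<le> ereal a * (INF n. ereal (u n))"
      by (rule pw_mul[OF a(2) h])
    then show ?case using elim(3) u a by (simp add: rv_mul_def)
  qed
qed

lemma homog_part: "pos_homogeneous_indicator M H D I \<Longrightarrow> cond_pos_homogeneous_rm M H Dom rho"
  unfolding cond_pos_homogeneous_rm_def
proof (intro ballI conjI)
  fix A X assume PH: "pos_homogeneous_indicator M H D I" and A: "A \<in> L0 M H ereal_nonneg_reals" and X: "X \<in> Dom"
  show "rv_mul A X \<in> Dom" using mul_Dom[OF PH A X] .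
  show "ae_eq M (rho (rv_mul A X)) (rv_mul A (rho X))"
    using rho_hom_lower[OF PH A X] rho_hom_upper[OF PH A X] unfolding ae_eq_def
    by eventually_elim simp
qed

end

theorem mainTheorem10:
  fixes M H :: "'a measure" and D :: "('a \<Rightarrow> ereal) set" and I :: "('a \<Rightarrow> ereal) \<Rightarrow> 'a \<Rightarrow> ereal"
  assumes "prob_space M"
    and "complete_measure M"
    and "subalgebra M H"
    and "null_sets M \<subseteq> sets H"
    and "cond_indicator M H D I"
    and "increasing_indicator M D I"
  shows "cond_risk_measure M H (Dom_rho_I M H D I) (rho_I M H D I)
    \<and> (H_convex M H (D_plus M D I) \<longrightarrow> cond_convex_rm M H (Dom_rho_I M H D I) (rho_I M H D I))
    \<and> (pos_homogeneous_indicator M H D I \<longrightarrow> cond_pos_homogeneous_rm M H (Dom_rho_I M H D I) (rho_I M H D I))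
    \<and> (superadditive_indicator M D I \<longrightarrow> subadditive_rm M (Dom_rho_I M H D I) (rho_I M H D I))"
proof -
  interpret setting M H D I
    by (rule setting.intro[OF assms(1) assms(3) assms(4) assms(5) assms(6)])
  show ?thesis using risk_measure convex_part homog_part subadd_part by blast
qed

end
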